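(* Let $\theta\in\mathbb{R}$ and let $\phi:\mathbb{N}\cup\{0\}\to\mathbb{R}$ be such that $\sum_kC^k|\phi(k)|(k!)^{-2}<\infty$ for every $C>0$. Then for continuous bounded variation paths $\gamma,\sigma:[a,b]\to V$ and every $(s,t)\in[a,b]^2$, \[ K_{\theta\phi}^{\gamma,\sigma}(s,t)=K_\phi^{\theta\gamma,\sigma}(s,t)=K_\phi^{\gamma,\theta\sigma}(s,t). \] In particular, if $\phi\equiv1$, then $K_\theta^{\gamma,\sigma}:=K_{\theta\phi}^{\gamma,\sigma}$ satisfies \[ K_\theta^{\gamma,\sigma}(s,t)=1+\theta\int_a^s\int_a^tK_\theta^{\gamma,\sigma}(u,v)\,\langle d\gamma_u,d\sigma_v\rangle . \]
   Context: $V$ is a finite-dimensional real inner product space, $\langle\cdot,\cdot\rangle_k$ the induced Hilbert–Schmidt inner product on $V^{\otimes k}$. Signature: $S(\gamma)^0=1$, $S(\gamma)^k_{s,t}=\int_{s<u_1<\dots<u_k<t}d\gamma_{u_1}\otimes\cdots\otimes d\gamma_{u_k}$. $K_\phi^{\gamma,\sigma}(s,t)=\sum_{k\ge0}\phi(k)\langle S(\gamma)^k_{a,s},S(\sigma)^k_{a,t}\rangle_k$. $\theta\phi$ denotes the function $n\mapsto\theta^n\phi(n)$, and $\theta\gamma$ the path $u\mapsto\theta\gamma_u$. *)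

theory Defs
  imports "HOL-Analysis.Analysis"
begin

definition is_partition :: "real \<Rightarrow> real \<Rightarrow> nat \<Rightarrow> (nat \<Rightarrow> real) \<Rightarrow> bool" where
  "is_partition a b n x \<longleftrightarrow> x 0 = a \<and> x n = b \<and> (\<forall>i<n. x i \<le> x (Suc i))"

definition bounded_variation_on :: "real \<Rightarrow> real \<Rightarrow> (real \<Rightarrow> 'a::real_normed_vector) \<Rightarrow> bool" where
  "bounded_variation_on a b g \<longleftrightarrow>
     (\<exists>M. \<forall>n x. is_partition a b n x \<longrightarrow> (\<Sum>i<n. norm (g (x (Suc i)) - g (x i))) \<le> M)"

definition has_RS_integral :: "(real \<Rightarrow> real) \<Rightarrow> (real \<Rightarrow> real) \<Rightarrow> real \<Rightarrow> real \<Rightarrow> real \<Rightarrow> bool" where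
  "has_RS_integral f g a b I \<longleftrightarrow>
     (\<forall>\<epsilon>>0. \<exists>\<delta>>0. \<forall>n x \<xi>. is_partition a b n x \<and> (\<forall>i<n. x (Suc i) - x i < \<delta>)
        \<and> (\<forall>i<n. x i \<le> \<xi> i \<and> \<xi> i \<le> x (Suc i))
        \<longrightarrow> \<bar>(\<Sum>i<n. f (\<xi> i) * (g (x (Suc i)) - g (x i))) - I\<bar> < \<epsilon>)"

definition RS_integral :: "(real \<Rightarrow> real) \<Rightarrow> (real \<Rightarrow> real) \<Rightarrow> real \<Rightarrow> real \<Rightarrow> real" where
  "RS_integral f g a b = (THE I. has_RS_integral f g a b I)"

text \<open>Coordinates of the level-k signature S(g)^k_{a,t} in the orthonormal tensor basis
  e_{i_1} \<otimes> ... \<otimes> e_{i_k}.  The index list is stored in reverse order: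
  the head is the last index i_k, so
  S^{k+1}(i_1..i_k i_{k+1})_{a,t} = \<integral>_a^t S^k(i_1..i_k)_{a,u} d<g_u, e_{i_{k+1}}>.\<close>
fun sig_coord :: "(real \<Rightarrow> 'a::euclidean_space) \<Rightarrow> real \<Rightarrow> real \<Rightarrow> 'a list \<Rightarrow> real" where
  "sig_coord g a t [] = 1"
| "sig_coord g a t (i # is) = RS_integral (\<lambda>u. sig_coord g a u is) (\<lambda>u. g u \<bullet> i) a t"

definition sig_inner :: "nat \<Rightarrow> (real \<Rightarrow> 'a::euclidean_space) \<Rightarrow> (real \<Rightarrow> 'a) \<Rightarrow> real \<Rightarrow> real \<Rightarrow> real \<Rightarrow> real" where
  "sig_inner k g h a s t =
     (\<Sum>is\<in>{is. set is \<subseteq> Basis \<and> length is = k}. sig_coord g a s is * sig_coord h a t is)"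

definition sig_kernel :: "(nat \<Rightarrow> real) \<Rightarrow> (real \<Rightarrow> 'a::euclidean_space) \<Rightarrow> (real \<Rightarrow> 'a) \<Rightarrow> real \<Rightarrow> real \<Rightarrow> real \<Rightarrow> real" where
  "sig_kernel \<phi> g h a s t = (\<Sum>k. \<phi> k * sig_inner k g h a s t)"

end

theory Submission
  imports Defs
begin


abbreviation RSsum :: "(real \<Rightarrow> real) \<Rightarrow> (real \<Rightarrow> real) \<Rightarrow> nat \<Rightarrow> (nat \<Rightarrow> real) \<Rightarrow> (nat \<Rightarrow> real) \<Rightarrow> real" where
  "RSsum f g n x \<xi> \<equiv> (\<Sum>i<n. f (\<xi> i) * (g (x (Suc i)) - g (x i)))"

lemma part_mono:
  assumes P: "is_partition a b n x" and ij: "i \<le> j" "j \<le> n" shows "x i \<le> x j"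
proof -
  have st: "\<forall>k<n. x k \<le> x (Suc k)" using P by (simp add: is_partition_def)
  have "x i \<le> x (i + k)" if "i + k \<le> n" for k using that
  proof (induction k)
    case 0 show ?case by simp
  next
    case (Suc k)
    then have "x i \<le> x (i + k)" by simp
    moreover have "x (i + k) \<le> x (Suc (i + k))" using st Suc.prems by simp
    ultimately show ?case by simp
  qed
  from this[of "j - i"] show ?thesis using ij by simp
qed

lemma part_in:
  assumes P: "is_partition a b n x" and i: "i \<le> n" shows "x i \<in> {a..b}"
proof -
  have "x 0 \<le> x i" "x i \<le> x n" using part_mono[OF P] i by auto
  then show ?thesis using P unfolding is_partition_def by auto
qed

lemma part_le: "is_partition a b n x \<Longrightarrow> a \<le> b"
  using part_mono[of a b n x 0 n] unfolding is_partition_def by auto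

lemma fine_partition:
  assumes ab: "a \<le> b" and d: "d > 0"
  shows "\<exists>n x. is_partition a b n x \<and> (\<forall>i<n. x (Suc i) - x i < d)"
proof -
  obtain N :: nat where N: "(b - a) / d < N" using reals_Archimedean2 by blast
  have "0 \<le> (b - a) / d" using ab d by simp
  then have Npos: "real N > 0" using N by linarith
  define h where "h = (b - a) / N"
  have h0: "h \<ge> 0" unfolding h_def using ab Npos by simp
  have hd: "h < d" unfolding h_def using N d Npos by (simp add: divide_less_eq mult.commute)
  define x where "x i = a + real i * h" for i
  have "x 0 = a" by (simp add: x_def)
  moreover have "x N = b" unfolding x_def h_def using Npos by simp
  moreover have "\<forall>i<N. x i \<le> x (Suc i)" unfolding x_def using h0 by (simp add: algebra_simps)
  moreover have "\<forall>i<N. x (Suc i) - x i < d" unfolding x_def using hd by (simp add: algebra_simps)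
  ultimately show ?thesis unfolding is_partition_def by blast
qed

lemma has_RS_D:
  assumes "has_RS_integral f g a b I" "e > 0"
  shows "\<exists>d>0. \<forall>n x \<xi>. is_partition a b n x \<and> (\<forall>i<n. x (Suc i) - x i < d)
        \<and> (\<forall>i<n. x i \<le> \<xi> i \<and> \<xi> i \<le> x (Suc i)) \<longrightarrow> \<bar>RSsum f g n x \<xi> - I\<bar> < e"
  by (rule assms(1)[unfolded has_RS_integral_def, rule_format, OF assms(2)])

lemma has_RS_unique:
  assumes ab: "a \<le> b" and I: "has_RS_integral f g a b I" and J: "has_RS_integral f g a b J"
  shows "I = J"
proof (rule ccontr)
  assume "I \<noteq> J"
  then have e: "\<bar>I - J\<bar> / 2 > 0" by simp
  obtain d1 where d1: "d1 > 0" "\<forall>n x \<xi>. is_partition a b n x \<and> (\<forall>i<n. x (Suc i) - x i < d1)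
        \<and> (\<forall>i<n. x i \<le> \<xi> i \<and> \<xi> i \<le> x (Suc i)) \<longrightarrow> \<bar>RSsum f g n x \<xi> - I\<bar> < \<bar>I - J\<bar> / 2"
    using has_RS_D[OF I e] by blast
  obtain d2 where d2: "d2 > 0" "\<forall>n x \<xi>. is_partition a b n x \<and> (\<forall>i<n. x (Suc i) - x i < d2)
        \<and> (\<forall>i<n. x i \<le> \<xi> i \<and> \<xi> i \<le> x (Suc i)) \<longrightarrow> \<bar>RSsum f g n x \<xi> - J\<bar> < \<bar>I - J\<bar> / 2"
    using has_RS_D[OF J e] by blast
  obtain n x where P: "is_partition a b n x" "\<forall>i<n. x (Suc i) - x i < min d1 d2"
    using fine_partition[OF ab, of "min d1 d2"] d1 d2 by auto
  have tag: "\<forall>i<n. x i \<le> x i \<and> x i \<le> x (Suc i)" using P unfolding is_partition_def by auto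
  have M1: "\<forall>i<n. x (Suc i) - x i < d1" and M2: "\<forall>i<n. x (Suc i) - x i < d2" using P by auto
  have "\<bar>RSsum f g n x x - I\<bar> < \<bar>I - J\<bar> / 2" by (rule d1(2)[rule_format]) (simp add: P tag M1)
  moreover have "\<bar>RSsum f g n x x - J\<bar> < \<bar>I - J\<bar> / 2" by (rule d2(2)[rule_format]) (simp add: P tag M2)
  ultimately show False by (simp add: abs_if split: if_splits)
qed

lemma RS_integral_eq:
  "a \<le> b \<Longrightarrow> has_RS_integral f g a b I \<Longrightarrow> RS_integral f g a b = I"
  unfolding RS_integral_def using has_RS_unique by blast

lemma RS_bound:
  assumes ab: "a \<le> b" and I: "has_RS_integral f g a b I"
    and B: "\<And>n x. is_partition a b n x \<Longrightarrow> \<bar>RSsum f g n x x\<bar> \<le> B"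
  shows "\<bar>I\<bar> \<le> B"
proof (rule ccontr)
  assume "\<not> \<bar>I\<bar> \<le> B"
  then have e: "\<bar>I\<bar> - B > 0" by simp
  obtain d1 where d1: "d1 > 0" "\<forall>n x \<xi>. is_partition a b n x \<and> (\<forall>i<n. x (Suc i) - x i < d1)
        \<and> (\<forall>i<n. x i \<le> \<xi> i \<and> \<xi> i \<le> x (Suc i)) \<longrightarrow> \<bar>RSsum f g n x \<xi> - I\<bar> < \<bar>I\<bar> - B"
    using has_RS_D[OF I e] by blast
  obtain n x where P: "is_partition a b n x" "\<forall>i<n. x (Suc i) - x i < d1"
    using fine_partition[OF ab d1(1)] by auto
  have tag: "\<forall>i<n. x i \<le> x i \<and> x i \<le> x (Suc i)" using P unfolding is_partition_def by auto
  have "\<bar>RSsum f g n x x - I\<bar> < \<bar>I\<bar> - B" by (rule d1(2)[rule_format]) (simp add: P tag)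
  moreover have "\<bar>RSsum f g n x x\<bar> \<le> B" using B P by auto
  ultimately show False by linarith
qed

lemma has_RS_cong_imp:
  assumes eq: "\<And>u. u \<in> {a..b} \<Longrightarrow> f u = f' u" and I: "has_RS_integral f g a b I"
  shows "has_RS_integral f' g a b I"
  unfolding has_RS_integral_def
proof (intro allI impI)
  fix e :: real assume e: "e > 0"
  have E: "RSsum f g n x \<xi> = RSsum f' g n x \<xi>" if "is_partition a b n x"
    "\<forall>i<n. x i \<le> \<xi> i \<and> \<xi> i \<le> x (Suc i)" for n x \<xi>
  proof (rule sum.cong)
    fix i assume "i \<in> {..<n}"
    then have "x i \<in> {a..b}" "x (Suc i) \<in> {a..b}" using part_in[OF that(1)] by auto
    then have "\<xi> i \<in> {a..b}" using that(2) \<open>i \<in> {..<n}\<close> by force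
    then show "f (\<xi> i) * (g (x (Suc i)) - g (x i)) = f' (\<xi> i) * (g (x (Suc i)) - g (x i))"
      using eq by simp
  qed simp
  obtain d where d: "d > 0" "\<forall>n x \<xi>. is_partition a b n x \<and> (\<forall>i<n. x (Suc i) - x i < d)
        \<and> (\<forall>i<n. x i \<le> \<xi> i \<and> \<xi> i \<le> x (Suc i)) \<longrightarrow> \<bar>RSsum f g n x \<xi> - I\<bar> < e"
    using has_RS_D[OF I e] by blast
  show "\<exists>d>0. \<forall>n x \<xi>. is_partition a b n x \<and> (\<forall>i<n. x (Suc i) - x i < d)
        \<and> (\<forall>i<n. x i \<le> \<xi> i \<and> \<xi> i \<le> x (Suc i)) \<longrightarrow> \<bar>RSsum f' g n x \<xi> - I\<bar> < e"
  proof (intro exI[of _ d] conjI allI impI)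
    fix n x \<xi> assume H: "is_partition a b n x \<and> (\<forall>i<n. x (Suc i) - x i < d)
        \<and> (\<forall>i<n. x i \<le> \<xi> i \<and> \<xi> i \<le> x (Suc i))"
    then have "\<bar>RSsum f g n x \<xi> - I\<bar> < e" by (intro d(2)[rule_format]) simp
    then show "\<bar>RSsum f' g n x \<xi> - I\<bar> < e" using E[of n x \<xi>] H by simp
  qed (rule d(1))
qed

lemma has_RS_cong:
  assumes "\<And>u. u \<in> {a..b} \<Longrightarrow> f u = f' u"
  shows "has_RS_integral f g a b I \<longleftrightarrow> has_RS_integral f' g a b I"
  using has_RS_cong_imp[of a b f f' g I] has_RS_cong_imp[of a b f' f g I] assms by auto

lemma has_RS_add:
  assumes I: "has_RS_integral f1 g a b I1" and J: "has_RS_integral f2 g a b I2"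
  shows "has_RS_integral (\<lambda>u. f1 u + f2 u) g a b (I1 + I2)"
  unfolding has_RS_integral_def
proof (intro allI impI)
  fix e :: real assume e: "e > 0"
  obtain d1 where d1: "d1 > 0" "\<forall>n x \<xi>. is_partition a b n x \<and> (\<forall>i<n. x (Suc i) - x i < d1)
        \<and> (\<forall>i<n. x i \<le> \<xi> i \<and> \<xi> i \<le> x (Suc i)) \<longrightarrow> \<bar>RSsum f1 g n x \<xi> - I1\<bar> < e/2"
    using has_RS_D[OF I half_gt_zero[OF e]] by blast
  obtain d2 where d2: "d2 > 0" "\<forall>n x \<xi>. is_partition a b n x \<and> (\<forall>i<n. x (Suc i) - x i < d2)
        \<and> (\<forall>i<n. x i \<le> \<xi> i \<and> \<xi> i \<le> x (Suc i)) \<longrightarrow> \<bar>RSsum f2 g n x \<xi> - I2\<bar> < e/2"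
    using has_RS_D[OF J half_gt_zero[OF e]] by blast
  show "\<exists>d>0. \<forall>n x \<xi>. is_partition a b n x \<and> (\<forall>i<n. x (Suc i) - x i < d)
        \<and> (\<forall>i<n. x i \<le> \<xi> i \<and> \<xi> i \<le> x (Suc i)) \<longrightarrow>
        \<bar>RSsum (\<lambda>u. f1 u + f2 u) g n x \<xi> - (I1 + I2)\<bar> < e"
  proof (intro exI[of _ "min d1 d2"] conjI allI impI)
    show "min d1 d2 > 0" using d1 d2 by simp
    fix n x \<xi> assume H: "is_partition a b n x \<and> (\<forall>i<n. x (Suc i) - x i < min d1 d2)
        \<and> (\<forall>i<n. x i \<le> \<xi> i \<and> \<xi> i \<le> x (Suc i))"
    have M1: "\<forall>i<n. x (Suc i) - x i < d1" and M2: "\<forall>i<n. x (Suc i) - x i < d2" using H by auto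
    have 1: "\<bar>RSsum f1 g n x \<xi> - I1\<bar> < e/2" by (rule d1(2)[rule_format]) (simp add: H M1)
    have 2: "\<bar>RSsum f2 g n x \<xi> - I2\<bar> < e/2" by (rule d2(2)[rule_format]) (simp add: H M2)
    have "RSsum (\<lambda>u. f1 u + f2 u) g n x \<xi> - (I1 + I2) = (RSsum f1 g n x \<xi> - I1) + (RSsum f2 g n x \<xi> - I2)"
      by (simp add: distrib_right sum.distrib)
    then have "\<bar>RSsum (\<lambda>u. f1 u + f2 u) g n x \<xi> - (I1 + I2)\<bar> = \<bar>(RSsum f1 g n x \<xi> - I1) + (RSsum f2 g n x \<xi> - I2)\<bar>"
      by (rule arg_cong)
    also have "\<dots> \<le> \<bar>RSsum f1 g n x \<xi> - I1\<bar> + \<bar>RSsum f2 g n x \<xi> - I2\<bar>" by (rule abs_triangle_ineq)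
    also have "\<dots> < e/2 + e/2" using 1 2 by (rule add_strict_mono)
    finally show "\<bar>RSsum (\<lambda>u. f1 u + f2 u) g n x \<xi> - (I1 + I2)\<bar> < e" by simp
  qed
qed

lemma has_RS_cmul:
  assumes I: "has_RS_integral f g a b I"
  shows "has_RS_integral (\<lambda>u. c * f u) g a b (c * I)"
proof (cases "c = 0")
  case True then show ?thesis unfolding has_RS_integral_def by (auto intro: exI[of _ 1])
next
  case False
  show ?thesis unfolding has_RS_integral_def
  proof (intro allI impI)
    fix e :: real assume e: "e > 0"
    then have e': "e / \<bar>c\<bar> > 0" using False by simp
    obtain d where d: "d > 0" "\<forall>n x \<xi>. is_partition a b n x \<and> (\<forall>i<n. x (Suc i) - x i < d)
        \<and> (\<forall>i<n. x i \<le> \<xi> i \<and> \<xi> i \<le> x (Suc i)) \<longrightarrow> \<bar>RSsum f g n x \<xi> - I\<bar> < e / \<bar>c\<bar>"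
      using has_RS_D[OF I e'] by blast
    show "\<exists>d>0. \<forall>n x \<xi>. is_partition a b n x \<and> (\<forall>i<n. x (Suc i) - x i < d)
        \<and> (\<forall>i<n. x i \<le> \<xi> i \<and> \<xi> i \<le> x (Suc i)) \<longrightarrow>
        \<bar>RSsum (\<lambda>u. c * f u) g n x \<xi> - c * I\<bar> < e"
    proof (intro exI[of _ d] conjI allI impI)
      show "d > 0" by fact
      fix n x \<xi> assume H: "is_partition a b n x \<and> (\<forall>i<n. x (Suc i) - x i < d)
        \<and> (\<forall>i<n. x i \<le> \<xi> i \<and> \<xi> i \<le> x (Suc i))"
      have 1: "\<bar>RSsum f g n x \<xi> - I\<bar> < e / \<bar>c\<bar>" by (rule d(2)[rule_format]) (simp add: H)
      have "RSsum (\<lambda>u. c * f u) g n x \<xi> - c * I = c * (RSsum f g n x \<xi> - I)"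
        by (simp add: sum_distrib_left algebra_simps)
      then have "\<bar>RSsum (\<lambda>u. c * f u) g n x \<xi> - c * I\<bar> = \<bar>c\<bar> * \<bar>RSsum f g n x \<xi> - I\<bar>"
        by (simp add: abs_mult)
      also have "\<dots> < \<bar>c\<bar> * (e / \<bar>c\<bar>)" using 1 False by (intro mult_strict_left_mono) auto
      also have "\<dots> = e" using False by simp
      finally show "\<bar>RSsum (\<lambda>u. c * f u) g n x \<xi> - c * I\<bar> < e" .
    qed
  qed
qed

lemma has_RS_zero: "has_RS_integral (\<lambda>u. 0) g a b 0"
  unfolding has_RS_integral_def by (auto intro: exI[of _ 1])

lemma has_RS_sum:
  assumes "finite K" "\<And>k. k \<in> K \<Longrightarrow> has_RS_integral (f k) g a b (I k)"
  shows "has_RS_integral (\<lambda>u. \<Sum>k\<in>K. f k u) g a b (\<Sum>k\<in>K. I k)"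
  using assms
proof (induction K rule: finite_induct)
  case empty then show ?case using has_RS_zero by simp
next
  case (insert k K)
  then show ?case using has_RS_add[of "f k" g a b "I k" "\<lambda>u. \<Sum>k\<in>K. f k u"] by simp
qed

lemma has_RS_diff:
  assumes "has_RS_integral f1 g a b I1" "has_RS_integral f2 g a b I2"
  shows "has_RS_integral (\<lambda>u. f1 u - f2 u) g a b (I1 - I2)"
  using has_RS_add[OF assms(1) has_RS_cmul[OF assms(2), of "-1"]] by simp

lemma has_RS_scale_intg:
  "has_RS_integral f (\<lambda>u. c * g u) a b J \<longleftrightarrow> has_RS_integral (\<lambda>u. c * f u) g a b J"
proof -
  have "RSsum f (\<lambda>u. c * g u) n x \<xi> = RSsum (\<lambda>u. c * f u) g n x \<xi>" for n x \<xi>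
    by (rule sum.cong) (auto simp: algebra_simps)
  then show ?thesis unfolding has_RS_integral_def by simp
qed



definition ctrl :: "(real \<Rightarrow> real) \<Rightarrow> (real \<Rightarrow> real) \<Rightarrow> real \<Rightarrow> real \<Rightarrow> bool" where
  "ctrl W g a b \<longleftrightarrow> (\<forall>x y. a \<le> x \<longrightarrow> x \<le> y \<longrightarrow> y \<le> b \<longrightarrow> \<bar>g y - g x\<bar> \<le> W y - W x)"

lemma ctrl_sub: "ctrl W g a b \<Longrightarrow> t \<le> b \<Longrightarrow> ctrl W g a t"
  unfolding ctrl_def by auto

lemma ctrl_mono: "ctrl W g a b \<Longrightarrow> a \<le> x \<Longrightarrow> x \<le> y \<Longrightarrow> y \<le> b \<Longrightarrow> W x \<le> W y"
  unfolding ctrl_def by (meson abs_ge_zero diff_ge_0_iff_ge order_trans)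

lemma SB1:
  assumes P: "is_partition a b n x" and C: "ctrl W g a b" and h: "\<And>i. i < n \<Longrightarrow> \<bar>h i\<bar> \<le> K"
  shows "\<bar>\<Sum>i<n. h i * (g (x (Suc i)) - g (x i))\<bar> \<le> K * (W b - W a)"
proof -
  have "\<bar>\<Sum>i<n. h i * (g (x (Suc i)) - g (x i))\<bar> \<le> (\<Sum>i<n. \<bar>h i * (g (x (Suc i)) - g (x i))\<bar>)"
    by (rule sum_abs)
  also have "\<dots> \<le> (\<Sum>i<n. K * (W (x (Suc i)) - W (x i)))"
  proof (rule sum_mono)
    fix i assume i: "i \<in> {..<n}"
    have xi: "a \<le> x i" "x i \<le> x (Suc i)" "x (Suc i) \<le> b"
      using part_in[OF P, of i] part_in[OF P, of "Suc i"] P i unfolding is_partition_def by auto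
    have "\<bar>g (x (Suc i)) - g (x i)\<bar> \<le> W (x (Suc i)) - W (x i)" using C xi unfolding ctrl_def by blast
    moreover have "\<bar>h i\<bar> \<le> K" using h i by simp
    ultimately show "\<bar>h i * (g (x (Suc i)) - g (x i))\<bar> \<le> K * (W (x (Suc i)) - W (x i))"
      unfolding abs_mult by (intro mult_mono) auto
  qed
  also have "\<dots> = K * (W (x n) - W (x 0))"
    by (simp only: sum_distrib_left[symmetric] sum_lessThan_telescope[of "\<lambda>i. W (x i)"])
  also have "\<dots> = K * (W b - W a)" using P unfolding is_partition_def by simp
  finally show ?thesis .
qed

lemma pow_ineq:
  fixes p q :: real
  assumes "0 \<le> p" "p \<le> q"
  shows "real (Suc k) * p ^ k * (q - p) \<le> q ^ Suc k - p ^ Suc k"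
proof (induction k)
  case 0 then show ?case by simp
next
  case (Suc k)
  have "q ^ Suc (Suc k) - p ^ Suc (Suc k) = q * (q ^ Suc k - p ^ Suc k) + p ^ Suc k * (q - p)"
    by (simp add: algebra_simps)
  also have "\<dots> \<ge> q * (real (Suc k) * p ^ k * (q - p)) + p ^ Suc k * (q - p)"
    using Suc assms by (intro add_right_mono mult_left_mono) auto
  moreover have "q * (real (Suc k) * p ^ k * (q - p)) \<ge> p * (real (Suc k) * p ^ k * (q - p))"
    using assms by (intro mult_right_mono) auto
  ultimately show ?case by (simp add: algebra_simps)
qed

lemma SB2:
  assumes P: "is_partition a b n x" and C: "ctrl W g a b" and W0: "W a \<ge> 0"
    and h: "\<And>i. i < n \<Longrightarrow> \<bar>h i\<bar> \<le> W (x i) ^ k / fact k"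
  shows "\<bar>\<Sum>i<n. h i * (g (x (Suc i)) - g (x i))\<bar> \<le> W b ^ Suc k / fact (Suc k)"
proof -
  have "\<bar>\<Sum>i<n. h i * (g (x (Suc i)) - g (x i))\<bar> \<le> (\<Sum>i<n. \<bar>h i * (g (x (Suc i)) - g (x i))\<bar>)"
    by (rule sum_abs)
  also have "\<dots> \<le> (\<Sum>i<n. W (x (Suc i)) ^ Suc k / fact (Suc k) - W (x i) ^ Suc k / fact (Suc k))"
  proof (rule sum_mono)
    fix i assume i: "i \<in> {..<n}"
    have xi: "a \<le> x i" "x i \<le> x (Suc i)" "x (Suc i) \<le> b"
      using part_in[OF P, of i] part_in[OF P, of "Suc i"] P i unfolding is_partition_def by auto
    have gW: "\<bar>g (x (Suc i)) - g (x i)\<bar> \<le> W (x (Suc i)) - W (x i)" using C xi unfolding ctrl_def by blast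
    have Wp: "0 \<le> W (x i)" using ctrl_mono[OF C order_refl, of "x i"] xi W0 by linarith
    have Wq: "W (x i) \<le> W (x (Suc i))" using ctrl_mono[OF C] xi by blast
    have "\<bar>h i * (g (x (Suc i)) - g (x i))\<bar> \<le> W (x i) ^ k / fact k * (W (x (Suc i)) - W (x i))"
      unfolding abs_mult using h i gW Wp by (intro mult_mono) auto
    also have "\<dots> = real (Suc k) * W (x i) ^ k * (W (x (Suc i)) - W (x i)) / fact (Suc k)"
    proof -
      have f: "(fact (Suc k) :: real) = real (Suc k) * fact k" by simp
      have nz: "real (Suc k) \<noteq> 0" by simp
      show ?thesis unfolding f
        by (simp only: mult.assoc mult_divide_mult_cancel_left[OF nz] times_divide_eq_left)
    qed
    also have "\<dots> \<le> (W (x (Suc i)) ^ Suc k - W (x i) ^ Suc k) / fact (Suc k)"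
      using pow_ineq[OF Wp Wq, of k] by (intro divide_right_mono) auto
    finally show "\<bar>h i * (g (x (Suc i)) - g (x i))\<bar> \<le> W (x (Suc i)) ^ Suc k / fact (Suc k) - W (x i) ^ Suc k / fact (Suc k)"
      by (simp add: diff_divide_distrib)
  qed
  also have "\<dots> = W (x n) ^ Suc k / fact (Suc k) - W (x 0) ^ Suc k / fact (Suc k)"
    by (rule sum_lessThan_telescope)
  also have "\<dots> \<le> W b ^ Suc k / fact (Suc k)" using P W0 unfolding is_partition_def by simp
  finally show ?thesis .
qed



lemma has_H:
  assumes at: "a \<le> t" and ac: "a \<le> c" and gc: "continuous_on {a..t} g"
  shows "has_RS_integral (\<lambda>u. if u \<le> c then 1 else 0) g a t (g (min c t) - g a)"
  unfolding has_RS_integral_def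
proof (intro allI impI)
  fix e :: real assume e: "e > 0"
  let ?H = "\<lambda>u::real. if u \<le> c then 1 else (0::real)"
  show "\<exists>d>0. \<forall>n x \<xi>. is_partition a t n x \<and> (\<forall>i<n. x (Suc i) - x i < d)
        \<and> (\<forall>i<n. x i \<le> \<xi> i \<and> \<xi> i \<le> x (Suc i)) \<longrightarrow> \<bar>RSsum ?H g n x \<xi> - (g (min c t) - g a)\<bar> < e"
  proof (cases "t \<le> c")
    case True
    show ?thesis
    proof (intro exI[of _ 1] conjI allI impI)
      fix n x \<xi> assume H: "is_partition a t n x \<and> (\<forall>i<n. x (Suc i) - x i < 1)
        \<and> (\<forall>i<n. x i \<le> \<xi> i \<and> \<xi> i \<le> x (Suc i))"
      have "RSsum ?H g n x \<xi> = (\<Sum>i<n. g (x (Suc i)) - g (x i))"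
      proof (rule sum.cong)
        fix i assume i: "i \<in> {..<n}"
        then have "\<xi> i \<le> x (Suc i)" "x (Suc i) \<le> t" using H part_in[of a t n x "Suc i"] by auto
        then have "\<xi> i \<le> c" using True by linarith
        then show "?H (\<xi> i) * (g (x (Suc i)) - g (x i)) = g (x (Suc i)) - g (x i)" by simp
      qed simp
      also have "\<dots> = g (x n) - g (x 0)" by (rule sum_lessThan_telescope)
      also have "\<dots> = g (min c t) - g a" using H True unfolding is_partition_def by simp
      finally show "\<bar>RSsum ?H g n x \<xi> - (g (min c t) - g a)\<bar> < e" using e by simp
    qed simp
  next
    case False
    then have ct: "c \<in> {a..t}" "min c t = c" using ac by auto
    obtain d where d: "d > 0" "\<forall>y\<in>{a..t}. dist y c < d \<longrightarrow> dist (g y) (g c) < e"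
      using gc ct(1) e unfolding continuous_on_iff by blast
    show ?thesis
    proof (intro exI[of _ d] conjI allI impI)
      show "d > 0" by fact
      fix n x \<xi> assume H: "is_partition a t n x \<and> (\<forall>i<n. x (Suc i) - x i < d)
        \<and> (\<forall>i<n. x i \<le> \<xi> i \<and> \<xi> i \<le> x (Suc i))"
      then have P: "is_partition a t n x" and M: "\<forall>i<n. x (Suc i) - x i < d"
        and T: "\<forall>i<n. x i \<le> \<xi> i \<and> \<xi> i \<le> x (Suc i)" by auto
      define m where "m = (LEAST i. i = n \<or> c < \<xi> i)"
      have mn: "m \<le> n" unfolding m_def by (rule Least_le) simp
      have lt: "\<xi> i \<le> c" if "i < m" for i
        using not_less_Least[OF that[unfolded m_def]] by auto
      have mprop: "m = n \<or> c < \<xi> m" unfolding m_def by (rule LeastI[of _ n]) simp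
      have ge: "c < \<xi> i" if "m \<le> i" "i < n" for i
      proof -
        have "m \<noteq> n" using that by simp
        then have cm: "c < \<xi> m" using mprop by simp
        show ?thesis
        proof (cases "m = i")
          case True then show ?thesis using cm by simp
        next
          case False
          then have "Suc m \<le> i" using that by simp
          then have "x (Suc m) \<le> x i" using part_mono[OF P, of "Suc m" i] that by simp
          moreover have "\<xi> m \<le> x (Suc m)" "x i \<le> \<xi> i" using T that by auto
          ultimately show ?thesis using cm by linarith
        qed
      qed
      have "RSsum ?H g n x \<xi> = (\<Sum>i<n. if i \<in> {..<m} then g (x (Suc i)) - g (x i) else 0)"
      proof (rule sum.cong)
        fix i assume i: "i \<in> {..<n}"
        show "?H (\<xi> i) * (g (x (Suc i)) - g (x i)) = (if i \<in> {..<m} then g (x (Suc i)) - g (x i) else 0)"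
        proof (cases "i < m")
          case True then show ?thesis using lt by simp
        next
          case False then have "c < \<xi> i" using ge i by simp
          then show ?thesis using False by simp
        qed
      qed simp
      also have "\<dots> = (\<Sum>i\<in>{..<n} \<inter> {..<m}. g (x (Suc i)) - g (x i))"
        by (rule sum.inter_restrict[symmetric]) simp
      also have "{..<n} \<inter> {..<m} = {..<m}" using mn by auto
      also have "(\<Sum>i<m. g (x (Suc i)) - g (x i)) = g (x m) - g (x 0)" by (rule sum_lessThan_telescope)
      finally have S: "RSsum ?H g n x \<xi> = g (x m) - g a" using P unfolding is_partition_def by simp
      have up: "x m < c + d"
      proof (cases m)
        case 0 then show ?thesis using P ac d unfolding is_partition_def by simp
      next
        case (Suc j)
        then have "\<xi> j \<le> c" "x j \<le> \<xi> j" "x (Suc j) - x j < d" using lt[of j] T M mn by auto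
        then show ?thesis using Suc by simp
      qed
      have lo: "c - d < x m"
      proof (cases "m = n")
        case True then show ?thesis using P False d unfolding is_partition_def by simp
      next
        case False
        then have "m < n" using mn by simp
        then have "c < \<xi> m" "\<xi> m \<le> x (Suc m)" "x (Suc m) - x m < d" using ge[of m] T M by auto
        then show ?thesis by simp
      qed
      have "x m \<in> {a..t}" using part_in[OF P mn] .
      moreover have "dist (x m) c < d" using up lo by (simp add: dist_real_def abs_less_iff)
      ultimately have "dist (g (x m)) (g c) < e" using d(2) by blast
      then show "\<bar>RSsum ?H g n x \<xi> - (g (min c t) - g a)\<bar> < e"
        using S ct(2) by (simp add: dist_real_def)
    qed
  qed
qed

definition stepfun :: "real \<Rightarrow> real \<Rightarrow> (real \<Rightarrow> real) \<Rightarrow> bool" where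
  "stepfun a b f \<longleftrightarrow> (\<forall>g. continuous_on {a..b} g \<longrightarrow>
     (\<exists>J. continuous_on {a..b} J \<and> (\<forall>u\<in>{a..b}. has_RS_integral f g a u (J u))))"

lemma stepfun_H:
  assumes ac: "a \<le> c" shows "stepfun a b (\<lambda>u. if u \<le> c then 1 else 0)"
  unfolding stepfun_def
proof (intro allI impI)
  fix g :: "real \<Rightarrow> real" assume gc: "continuous_on {a..b} g"
  show "\<exists>J. continuous_on {a..b} J \<and> (\<forall>u\<in>{a..b}. has_RS_integral (\<lambda>u. if u \<le> c then 1 else 0) g a u (J u))"
  proof (intro exI[of _ "\<lambda>u. g (min c u) - g a"] conjI ballI)
    have "continuous_on {a..b} (\<lambda>u. g (min c u))"
      by (rule continuous_on_compose2[OF gc]) (auto intro!: continuous_intros simp: ac)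
    then show "continuous_on {a..b} (\<lambda>u. g (min c u) - g a)" by (intro continuous_intros)
  next
    fix u assume u: "u \<in> {a..b}"
    have "continuous_on {a..u} g" by (rule continuous_on_subset[OF gc]) (use u in auto)
    then show "has_RS_integral (\<lambda>u. if u \<le> c then 1 else 0) g a u (g (min c u) - g a)"
      using has_H[of a u c g] u ac by auto
  qed
qed

lemma stepfun_add:
  assumes "stepfun a b f1" "stepfun a b f2" shows "stepfun a b (\<lambda>u. f1 u + f2 u)"
  unfolding stepfun_def
proof (intro allI impI)
  fix g :: "real \<Rightarrow> real" assume gc: "continuous_on {a..b} g"
  obtain J1 where J1: "continuous_on {a..b} J1" "\<forall>u\<in>{a..b}. has_RS_integral f1 g a u (J1 u)"
    using assms(1) gc unfolding stepfun_def by blast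
  obtain J2 where J2: "continuous_on {a..b} J2" "\<forall>u\<in>{a..b}. has_RS_integral f2 g a u (J2 u)"
    using assms(2) gc unfolding stepfun_def by blast
  show "\<exists>J. continuous_on {a..b} J \<and> (\<forall>u\<in>{a..b}. has_RS_integral (\<lambda>u. f1 u + f2 u) g a u (J u))"
    by (intro exI[of _ "\<lambda>u. J1 u + J2 u"] conjI ballI continuous_intros J1 J2 has_RS_add)
       (use J1 J2 in auto)
qed

lemma stepfun_cmul:
  assumes "stepfun a b f" shows "stepfun a b (\<lambda>u. c * f u)"
  unfolding stepfun_def
proof (intro allI impI)
  fix g :: "real \<Rightarrow> real" assume gc: "continuous_on {a..b} g"
  obtain J where J: "continuous_on {a..b} J" "\<forall>u\<in>{a..b}. has_RS_integral f g a u (J u)"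
    using assms(1) gc unfolding stepfun_def by blast
  show "\<exists>J. continuous_on {a..b} J \<and> (\<forall>u\<in>{a..b}. has_RS_integral (\<lambda>u. c * f u) g a u (J u))"
    by (intro exI[of _ "\<lambda>u. c * J u"] conjI ballI continuous_intros J has_RS_cmul)
       (use J in auto)
qed

lemma stepfun_zero: "stepfun a b (\<lambda>u. 0)"
  unfolding stepfun_def using has_RS_zero by (auto intro!: exI[of _ "\<lambda>u. 0"])

lemma stepfun_sum:
  assumes "finite K" "\<And>k. k \<in> K \<Longrightarrow> stepfun a b (f k)"
  shows "stepfun a b (\<lambda>u. \<Sum>k\<in>K. f k u)"
  using assms
proof (induction K rule: finite_induct)
  case empty then show ?case using stepfun_zero by simp
next
  case (insert k K)
  then show ?case using stepfun_add[of a b "f k" "\<lambda>u. \<Sum>k\<in>K. f k u"] by simp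
qed



lemma approx_step:
  assumes ab: "a \<le> b" and fc: "continuous_on {a..b} f" and e: "e > 0"
  shows "\<exists>f'. stepfun a b f' \<and> (\<forall>u\<in>{a..b}. \<bar>f u - f' u\<bar> \<le> e)"
proof -
  have "uniformly_continuous_on {a..b} f" using fc compact_uniformly_continuous by blast
  then obtain d where d: "d > 0" "\<forall>x\<in>{a..b}. \<forall>x'\<in>{a..b}. dist x' x < d \<longrightarrow> dist (f x') (f x) < e"
    using e unfolding uniformly_continuous_on_def by blast
  obtain N :: nat where N: "(b - a) / d < N" using reals_Archimedean2 by blast
  have "0 \<le> (b - a) / d" using ab d by simp
  then have Npos: "real N > 0" using N by linarith
  define h where "h = (b - a) / N"
  have h0: "h \<ge> 0" unfolding h_def using ab Npos by simp
  have hd: "h < d" unfolding h_def using N d Npos by (simp add: divide_less_eq mult.commute)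
  define p where "p k = a + real k * h" for k
  have p0: "p 0 = a" by (simp add: p_def)
  have pN: "p N = b" unfolding p_def h_def using Npos by simp
  have pmono: "p k \<le> p (Suc k)" for k unfolding p_def using h0 by (simp add: algebra_simps)
  have pa: "a \<le> p k" for k unfolding p_def using h0 by simp
  have pb: "p k \<le> b" if "k \<le> N" for k
  proof -
    have "real k * h \<le> real N * h" using that h0 by (intro mult_right_mono) auto
    then show ?thesis using pN unfolding p_def by simp
  qed
  have pstep: "p (Suc k) - p k = h" for k unfolding p_def by (simp add: algebra_simps)
  define H where "H c u = (if u \<le> c then 1 else (0::real))" for c u :: real
  define f' where "f' u = f a * H a u + (\<Sum>k<N. f (p (Suc k)) * (H (p (Suc k)) u - H (p k) u))" for u
  have "stepfun a b f'"
  proof -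
    have s1: "stepfun a b (\<lambda>u. f a * H a u)" unfolding H_def by (intro stepfun_cmul stepfun_H) simp
    have "stepfun a b (\<lambda>u. H (p (Suc k)) u - H (p k) u)" for k
      using stepfun_add[OF stepfun_H[OF pa[of "Suc k"]] stepfun_cmul[OF stepfun_H[OF pa[of k]], where c="-1"]]
      unfolding H_def by simp
    then have s2: "stepfun a b (\<lambda>u. \<Sum>k<N. f (p (Suc k)) * (H (p (Suc k)) u - H (p k) u))"
      by (intro stepfun_sum stepfun_cmul) auto
    show ?thesis unfolding f'_def by (rule stepfun_add[OF s1 s2])
  qed
  moreover have "\<bar>f u - f' u\<bar> \<le> e" if u: "u \<in> {a..b}" for u
  proof -
    define D where "D k = H (p (Suc k)) u - H (p k) u" for k
    have D0: "D k \<ge> 0" for k using pmono[of k] unfolding D_def H_def by auto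
    have sumD: "(\<Sum>k<N. D k) = 1 - H a u"
      unfolding D_def using sum_lessThan_telescope[of "\<lambda>k. H (p k) u" N] pN p0 u unfolding H_def by auto
    have "f u - f' u = (f u - f a) * H a u + (\<Sum>k<N. (f u - f (p (Suc k))) * D k)"
    proof -
      have "H a u + (\<Sum>k<N. D k) = 1" using sumD by simp
      then have "f u = f u * (H a u + (\<Sum>k<N. D k))" by simp
      then have "f u = f u * H a u + f u * (\<Sum>k<N. D k)" by (simp only: distrib_left)
      moreover have "f' u = f a * H a u + (\<Sum>k<N. f (p (Suc k)) * D k)" unfolding f'_def D_def by simp
      moreover have "(\<Sum>k<N. (f u - f (p (Suc k))) * D k) = f u * (\<Sum>k<N. D k) - (\<Sum>k<N. f (p (Suc k)) * D k)"
        by (simp add: left_diff_distrib sum_subtractf sum_distrib_left)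
      ultimately show ?thesis by (simp add: left_diff_distrib)
    qed
    moreover have "(f u - f a) * H a u = 0" using u unfolding H_def by auto
    moreover have kb: "\<bar>(f u - f (p (Suc k))) * D k\<bar> \<le> e * D k" if kN: "k < N" for k
    proof (cases "D k = 0")
      case True then show ?thesis by simp
    next
      case False
      then have "p k < u" "u \<le> p (Suc k)" using pmono[of k] unfolding D_def H_def by (auto split: if_splits)
      then have "dist u (p (Suc k)) < d" using pstep[of k] hd by (simp add: dist_real_def)
      moreover have "p (Suc k) \<in> {a..b}"
        using pa[of "Suc k"] \<open>u \<le> p (Suc k)\<close> u
        using pb[of "Suc k"] kN by auto
      ultimately have "\<bar>f u - f (p (Suc k))\<bar> < e" using d(2) u by (auto simp: dist_real_def)
      moreover have "D k = 1" using False pmono[of k] unfolding D_def H_def by (auto split: if_splits)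
      ultimately show ?thesis by simp
    qed
    ultimately have "\<bar>f u - f' u\<bar> = \<bar>\<Sum>k<N. (f u - f (p (Suc k))) * D k\<bar>" by simp
    also have "\<dots> \<le> (\<Sum>k<N. \<bar>(f u - f (p (Suc k))) * D k\<bar>)" by (rule sum_abs)
    also have "\<dots> \<le> (\<Sum>k<N. e * D k)" by (rule sum_mono) (use kb in auto)
    also have "\<dots> = e * (1 - H a u)" by (simp only: sum_distrib_left[symmetric] sumD)
    also have "\<dots> \<le> e" using e unfolding H_def by auto
    finally show ?thesis .
  qed
  ultimately show ?thesis by blast
qed



lemma tri3: "\<bar>(a::real) - d\<bar> \<le> \<bar>a - b\<bar> + \<bar>b - c\<bar> + \<bar>c - d\<bar>"
proof -
  have "\<bar>a - c\<bar> \<le> \<bar>a - b\<bar> + \<bar>b - c\<bar>" using abs_triangle_ineq[of "a - b" "b - c"] by simp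
  moreover have "\<bar>a - d\<bar> \<le> \<bar>a - c\<bar> + \<bar>c - d\<bar>" using abs_triangle_ineq[of "a - c" "c - d"] by simp
  ultimately show ?thesis by linarith
qed

lemma approx_value:
  assumes at: "a \<le> t" and C: "ctrl W g a t"
    and I: "has_RS_integral f g a t I" and I': "has_RS_integral f' g a t I'"
    and fe: "\<And>u. u \<in> {a..t} \<Longrightarrow> \<bar>f u - f' u\<bar> \<le> e"
  shows "\<bar>I - I'\<bar> \<le> e * (W t - W a)"
proof (rule RS_bound[OF at has_RS_diff[OF I I']])
  fix n x assume P: "is_partition a t n x"
  have "\<bar>\<Sum>i<n. (f (x i) - f' (x i)) * (g (x (Suc i)) - g (x i))\<bar> \<le> e * (W t - W a)"
    by (rule SB1[OF P C]) (use fe part_in[OF P] in auto)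
  then show "\<bar>RSsum (\<lambda>u. f u - f' u) g n x x\<bar> \<le> e * (W t - W a)" by simp
qed

lemma approx_exists:
  assumes at: "a \<le> t" and C: "ctrl W g a t"
    and A: "\<And>e. e > 0 \<Longrightarrow> \<exists>f' I'. has_RS_integral f' g a t I' \<and> (\<forall>u\<in>{a..t}. \<bar>f u - f' u\<bar> \<le> e)"
  shows "\<exists>I. has_RS_integral f g a t I"
proof -
  define D where "D = W t - W a"
  have D0: "D \<ge> 0" unfolding D_def using ctrl_mono[OF C order_refl at order_refl] by simp
  have "\<forall>n::nat. \<exists>f' I'. has_RS_integral f' g a t I' \<and> (\<forall>u\<in>{a..t}. \<bar>f u - f' u\<bar> \<le> 1 / real (Suc n))"
    using A by simp
  then obtain F where F: "\<forall>n::nat. \<exists>I'. has_RS_integral (F n) g a t I' \<and> (\<forall>u\<in>{a..t}. \<bar>f u - F n u\<bar> \<le> 1 / real (Suc n))"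
    by (rule choice[THEN exE])
  then obtain J where J: "\<forall>n::nat. has_RS_integral (F n) g a t (J n) \<and> (\<forall>u\<in>{a..t}. \<bar>f u - F n u\<bar> \<le> 1 / real (Suc n))"
    by (rule choice[THEN exE])
  have FJ: "\<And>n. has_RS_integral (F n) g a t (J n)"
    "\<And>n u. u \<in> {a..t} \<Longrightarrow> \<bar>f u - F n u\<bar> \<le> 1 / real (Suc n)" using J by auto
  have Jd: "\<bar>J n - J m\<bar> \<le> (1 / real (Suc n) + 1 / real (Suc m)) * D" for n m
    unfolding D_def
  proof (rule approx_value[OF at C FJ(1) FJ(1)])
    fix u assume "u \<in> {a..t}"
    then have "\<bar>f u - F n u\<bar> \<le> 1 / real (Suc n)" "\<bar>f u - F m u\<bar> \<le> 1 / real (Suc m)" using FJ(2) by auto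
    then show "\<bar>F n u - F m u\<bar> \<le> 1 / real (Suc n) + 1 / real (Suc m)" by linarith
  qed
  have small: "\<exists>M. \<forall>n\<ge>M. 1 / real (Suc n) * (D + 1) < r" if r: "r > 0" for r
  proof -
    obtain M where M: "inverse (real (Suc M)) < r / (D + 1)" using reals_Archimedean[of "r / (D + 1)"] r D0 by auto
    show ?thesis
    proof (intro exI allI impI)
      fix n assume "M \<le> n"
      then have "1 / real (Suc n) \<le> 1 / real (Suc M)" by (simp add: frac_le)
      also have "\<dots> < r / (D + 1)" using M by (simp add: inverse_eq_divide)
      finally show "1 / real (Suc n) * (D + 1) < r" using D0 by (simp add: field_simps)
    qed
  qed
  have "Cauchy J"
  proof (rule CauchyI)
    fix r :: real assume r: "r > 0"
    obtain M where M: "\<forall>n\<ge>M. 1 / real (Suc n) * (D + 1) < r / 2" using small[of "r/2"] r by auto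
    show "\<exists>M. \<forall>m\<ge>M. \<forall>n\<ge>M. norm (J m - J n) < r"
    proof (intro exI allI impI)
      fix m n assume mn: "M \<le> m" "M \<le> n"
      have "\<bar>J m - J n\<bar> \<le> (1 / real (Suc m) + 1 / real (Suc n)) * D" by (rule Jd)
      also have "\<dots> \<le> 1 / real (Suc m) * (D + 1) + 1 / real (Suc n) * (D + 1)"
      proof -
        have "1 / real (Suc m) * D \<le> 1 / real (Suc m) * (D + 1)" "1 / real (Suc n) * D \<le> 1 / real (Suc n) * (D + 1)"
          by (intro mult_left_mono; simp)+
        then show ?thesis by (simp only: distrib_right)
      qed
      also have "\<dots> < r / 2 + r / 2" using M mn by (intro add_strict_mono) auto
      finally show "norm (J m - J n) < r" by simp
    qed
  qed
  then obtain I where JI: "J \<longlonglongrightarrow> I" using Cauchy_convergent_iff convergent_def by blast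
  have "has_RS_integral f g a t I"
    unfolding has_RS_integral_def
  proof (intro allI impI)
    fix e :: real assume e: "e > 0"
    obtain M1 where M1: "\<forall>n\<ge>M1. 1 / real (Suc n) * (D + 1) < e / 3" using small[of "e/3"] e by auto
    obtain M2 where M2: "\<forall>n\<ge>M2. norm (J n - I) < e / 3"
      using JI e unfolding LIMSEQ_iff by (meson divide_pos_pos zero_less_numeral)
    define n where "n = max M1 M2"
    have n1: "1 / real (Suc n) * (D + 1) < e / 3" using M1 n_def by simp
    have n2: "\<bar>J n - I\<bar> < e / 3" using M2 n_def by simp
    have e3: "e / 3 > 0" using e by simp
    obtain d where d: "d > 0" "\<forall>k x \<xi>. is_partition a t k x \<and> (\<forall>i<k. x (Suc i) - x i < d)
        \<and> (\<forall>i<k. x i \<le> \<xi> i \<and> \<xi> i \<le> x (Suc i)) \<longrightarrow> \<bar>RSsum (F n) g k x \<xi> - J n\<bar> < e / 3"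
      using has_RS_D[OF FJ(1) e3] by blast
    show "\<exists>d>0. \<forall>k x \<xi>. is_partition a t k x \<and> (\<forall>i<k. x (Suc i) - x i < d)
        \<and> (\<forall>i<k. x i \<le> \<xi> i \<and> \<xi> i \<le> x (Suc i)) \<longrightarrow> \<bar>RSsum f g k x \<xi> - I\<bar> < e"
    proof (intro exI[of _ d] conjI allI impI)
      show "d > 0" by fact
      fix k x \<xi> assume H: "is_partition a t k x \<and> (\<forall>i<k. x (Suc i) - x i < d)
        \<and> (\<forall>i<k. x i \<le> \<xi> i \<and> \<xi> i \<le> x (Suc i))"
      then have P: "is_partition a t k x" and T: "\<forall>i<k. x i \<le> \<xi> i \<and> \<xi> i \<le> x (Suc i)" by auto
      have 1: "\<bar>RSsum (F n) g k x \<xi> - J n\<bar> < e / 3" by (rule d(2)[rule_format]) (use H in simp)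
      have "RSsum f g k x \<xi> - RSsum (F n) g k x \<xi> = (\<Sum>i<k. (f (\<xi> i) - F n (\<xi> i)) * (g (x (Suc i)) - g (x i)))"
        by (simp add: sum_subtractf left_diff_distrib)
      also have "\<bar>\<dots>\<bar> \<le> 1 / real (Suc n) * D"
      proof (rule SB1[OF P C[folded D_def[symmetric]], unfolded D_def[symmetric]])
        fix i assume i: "i < k"
        have "x i \<in> {a..t}" "x (Suc i) \<in> {a..t}" using part_in[OF P] i by auto
        then have "\<xi> i \<in> {a..t}" using T i by force
        then show "\<bar>f (\<xi> i) - F n (\<xi> i)\<bar> \<le> 1 / real (Suc n)" using FJ(2) by blast
      qed
      finally have 2: "\<bar>RSsum f g k x \<xi> - RSsum (F n) g k x \<xi>\<bar> \<le> 1 / real (Suc n) * D" .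
      have "1 / real (Suc n) * D \<le> 1 / real (Suc n) * (D + 1)" by (intro mult_left_mono; simp)
      then show "\<bar>RSsum f g k x \<xi> - I\<bar> < e"
        using 1 2 n1 n2 tri3[of "RSsum f g k x \<xi>" "RSsum (F n) g k x \<xi>" "J n" I] by linarith
    qed
  qed
  then show ?thesis by blast
qed

lemma RS_exists:
  assumes au: "a \<le> u" "u \<le> b" and fc: "continuous_on {a..b} f" and gc: "continuous_on {a..b} g"
    and C: "ctrl W g a b"
  shows "\<exists>I. has_RS_integral f g a u I"
proof (rule approx_exists[OF au(1) ctrl_sub[OF C au(2)]])
  fix e :: real assume e: "e > 0"
  obtain f' where f': "stepfun a b f'" "\<forall>u\<in>{a..b}. \<bar>f u - f' u\<bar> \<le> e"
    using approx_step[OF order_trans[OF au] fc e] by blast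
  obtain J where J: "\<forall>u\<in>{a..b}. has_RS_integral f' g a u (J u)"
    using f'(1) gc unfolding stepfun_def by blast
  show "\<exists>f' I'. has_RS_integral f' g a u I' \<and> (\<forall>v\<in>{a..u}. \<bar>f v - f' v\<bar> \<le> e)"
    using J f'(2) au by (intro exI[of _ f'] exI[of _ "J u"]) auto
qed

lemma RS_cont:
  assumes ab: "a \<le> b" and fc: "continuous_on {a..b} f" and gc: "continuous_on {a..b} g"
    and C: "ctrl W g a b"
  shows "continuous_on {a..b} (\<lambda>u. RS_integral f g a u)"
  unfolding continuous_on_iff
proof (intro ballI allI impI)
  fix u0 e :: real assume u0: "u0 \<in> {a..b}" and e: "e > 0"
  define D where "D = W b - W a"
  have D0: "D \<ge> 0" unfolding D_def using ctrl_mono[OF C order_refl ab order_refl] by simp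
  define \<eta> where "\<eta> = e / (3 * (D + 1))"
  have \<eta>0: "\<eta> > 0" unfolding \<eta>_def using e D0 by simp
  have \<eta>D: "\<eta> * D < e / 3"
  proof -
    have 1: "e / (3 * (D + 1)) * D = e / 3 * (D / (D + 1))" by simp
    have 2: "D / (D + 1) < 1" using D0 by simp
    have "e / 3 * (D / (D + 1)) < e / 3 * 1" using 2 e by (intro mult_strict_left_mono) auto
    then show ?thesis using 1 unfolding \<eta>_def by simp
  qed
  obtain f' where f': "stepfun a b f'" "\<forall>u\<in>{a..b}. \<bar>f u - f' u\<bar> \<le> \<eta>"
    using approx_step[OF ab fc \<eta>0] by blast
  obtain J where J: "continuous_on {a..b} J" "\<forall>u\<in>{a..b}. has_RS_integral f' g a u (J u)"
    using f'(1) gc unfolding stepfun_def by blast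
  have close: "\<bar>RS_integral f g a u - J u\<bar> < e / 3" if u: "u \<in> {a..b}" for u
  proof -
    obtain I where I: "has_RS_integral f g a u I" using RS_exists[OF _ _ fc gc C, of u] u by auto
    have RI: "RS_integral f g a u = I" using RS_integral_eq[OF _ I] u by simp
    have "\<bar>I - J u\<bar> \<le> \<eta> * (W u - W a)"
      by (rule approx_value[OF _ ctrl_sub[OF C] I J(2)[rule_format, OF u]]) (use u f'(2) in auto)
    also have "\<dots> \<le> \<eta> * D" unfolding D_def using \<eta>0 ctrl_mono[OF C _ _ order_refl, of u] u
      by (intro mult_left_mono) auto
    finally show ?thesis using RI \<eta>D by simp
  qed
  obtain d where d: "d > 0" "\<forall>u\<in>{a..b}. dist u u0 < d \<longrightarrow> dist (J u) (J u0) < e / 3"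
  proof -
    have "e / 3 > 0" using e by simp
    then show ?thesis using J(1) u0 that unfolding continuous_on_iff by blast
  qed
  show "\<exists>d>0. \<forall>u\<in>{a..b}. dist u u0 < d \<longrightarrow> dist (RS_integral f g a u) (RS_integral f g a u0) < e"
  proof (intro exI[of _ d] conjI ballI impI)
    fix u assume u: "u \<in> {a..b}" and du: "dist u u0 < d"
    have "\<bar>J u - J u0\<bar> < e / 3" using d(2) u du by (auto simp: dist_real_def)
    then show "dist (RS_integral f g a u) (RS_integral f g a u0) < e"
    proof -
      have "\<bar>J u0 - RS_integral f g a u0\<bar> < e / 3" using close[OF u0] by (simp add: abs_minus_commute)
      then show ?thesis
        using close[OF u] tri3[of "RS_integral f g a u" "J u" "J u0" "RS_integral f g a u0"] \<open>\<bar>J u - J u0\<bar> < e / 3\<close>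
        unfolding dist_real_def by linarith
    qed
  qed (rule d(1))
qed



lemma suminf_abs_bound:
  fixes x m :: "nat \<Rightarrow> real"
  assumes "\<And>k. \<bar>x k\<bar> \<le> m k" "summable m"
  shows "summable x" "\<bar>suminf x\<bar> \<le> suminf m"
proof -
  have xm: "x k \<le> m k" for k using assms(1)[of k] by (rule abs_le_D1)
  have nxm: "- x k \<le> m k" for k using assms(1)[of k] by (rule abs_le_D2)
  show sx: "summable x"
    by (rule summable_comparison_test'[of m 0]) (use assms in simp_all)
  have "suminf x \<le> suminf m" by (rule suminf_le[OF xm sx assms(2)])
  moreover have "suminf (\<lambda>k. - x k) \<le> suminf m" by (rule suminf_le[OF nxm summable_minus[OF sx] assms(2)])
  moreover have "suminf (\<lambda>k. - x k) = - suminf x" using sx by (rule suminf_minus)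
  ultimately show "\<bar>suminf x\<bar> \<le> suminf m" by linarith
qed

lemma RS_series:
  assumes at: "a \<le> t" and C: "ctrl W g a t"
    and I: "\<And>k. has_RS_integral (f k) g a t (I k)"
    and B: "\<And>k u. u \<in> {a..t} \<Longrightarrow> \<bar>f k u\<bar> \<le> m k" and sm: "summable m"
  shows "summable I \<and> has_RS_integral (\<lambda>u. \<Sum>k. f k u) g a t (\<Sum>k. I k)"
proof -
  define R where "R N = (\<Sum>k. m (k + N))" for N
  define D where "D = W t - W a"
  have D0: "D \<ge> 0" unfolding D_def using ctrl_mono[OF C order_refl at order_refl] by simp
  have R0: "R \<longlonglongrightarrow> 0"
  proof -
    have "R = (\<lambda>N. suminf m - (\<Sum>i<N. m i))" unfolding R_def
      using suminf_minus_initial_segment[OF sm] by (intro ext) simp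
    moreover have "(\<lambda>N. suminf m - (\<Sum>i<N. m i)) \<longlonglongrightarrow> suminf m - suminf m"
      by (intro tendsto_diff tendsto_const summable_LIMSEQ[OF sm])
    ultimately show ?thesis by simp
  qed
  have approx: "\<bar>(\<Sum>k. f k u) - (\<Sum>k<N. f k u)\<bar> \<le> R N" if u: "u \<in> {a..t}" for u N
  proof -
    have sf: "summable (\<lambda>k. f k u)" using suminf_abs_bound(1)[of "\<lambda>k. f k u" m] B[OF u] sm by blast
    have "(\<Sum>k. f k u) - (\<Sum>k<N. f k u) = (\<Sum>k. f (k + N) u)"
      using suminf_split_initial_segment[OF sf, of N] by simp
    also have "\<bar>\<dots>\<bar> \<le> R N" unfolding R_def
      by (rule suminf_abs_bound(2)) (use B[OF u] summable_ignore_initial_segment[OF sm] in auto)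
    finally show ?thesis .
  qed
  have hasN: "has_RS_integral (\<lambda>u. \<Sum>k<N. f k u) g a t (\<Sum>k<N. I k)" for N
    by (rule has_RS_sum) (auto intro: I)
  obtain J where J: "has_RS_integral (\<lambda>u. \<Sum>k. f k u) g a t J"
  proof -
    have "\<exists>J. has_RS_integral (\<lambda>u. \<Sum>k. f k u) g a t J"
    proof (rule approx_exists[OF at C])
      fix e :: real assume e: "e > 0"
      obtain N where N: "\<forall>n\<ge>N. norm (R n - 0) < e" using R0 e unfolding LIMSEQ_iff by blast
      then have "R N < e" by auto
      have "\<forall>u\<in>{a..t}. \<bar>(\<Sum>k. f k u) - (\<Sum>k<N. f k u)\<bar> \<le> e"
        using approx[of _ N] \<open>R N < e\<close> by (meson less_imp_le order_trans)
      then show "\<exists>f' I'. has_RS_integral f' g a t I' \<and> (\<forall>u\<in>{a..t}. \<bar>(\<Sum>k. f k u) - f' u\<bar> \<le> e)"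
        using hasN[of N] by blast
    qed
    then show ?thesis using that by blast
  qed
  have close: "\<bar>J - (\<Sum>k<N. I k)\<bar> \<le> R N * D" for N
    unfolding D_def by (rule approx_value[OF at C J hasN]) (rule approx)
  have "(\<lambda>N. (\<Sum>k<N. I k) - J) \<longlonglongrightarrow> 0"
  proof (rule Lim_null_comparison)
    show "\<forall>\<^sub>F N in sequentially. norm ((\<Sum>k<N. I k) - J) \<le> R N * D"
    proof (intro always_eventually allI)
      fix N
      have "norm ((\<Sum>k<N. I k) - J) = \<bar>J - (\<Sum>k<N. I k)\<bar>" by (simp add: abs_minus_commute)
      then show "norm ((\<Sum>k<N. I k) - J) \<le> R N * D" using close[of N] by simp
    qed
    show "(\<lambda>N. R N * D) \<longlonglongrightarrow> 0" using tendsto_mult[OF R0 tendsto_const[of D]] by simp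
  qed
  then have "(\<lambda>N. ((\<Sum>k<N. I k) - J) + J) \<longlonglongrightarrow> 0 + J" by (intro tendsto_add tendsto_const)
  then have "I sums J" unfolding sums_def by simp
  then have "summable I" "J = suminf I" using sums_summable sums_unique by blast+
  then show ?thesis using J by simp
qed



lemma has_RS_cmul_right:
  assumes "has_RS_integral f g a b I" shows "has_RS_integral (\<lambda>u. f u * c) g a b (I * c)"
proof -
  have "has_RS_integral (\<lambda>u. c * f u) g a b (c * I)" by (rule has_RS_cmul[OF assms])
  moreover have "(\<lambda>u. c * f u) = (\<lambda>u. f u * c)" by (rule ext) (rule mult.commute)
  moreover have "c * I = I * c" by (rule mult.commute)
  ultimately show ?thesis by simp
qed

lemma part_extend:
  assumes P: "is_partition a x n p" and xy: "x \<le> y"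
  shows "is_partition a y (Suc n) (p(Suc n := y))"
    and "(\<Sum>i<Suc n. norm (\<gamma> ((p(Suc n := y)) (Suc i)) - \<gamma> ((p(Suc n := y)) i)))
         = (\<Sum>i<n. norm (\<gamma> (p (Suc i)) - \<gamma> (p i))) + norm (\<gamma> y - \<gamma> x)"
proof -
  show "is_partition a y (Suc n) (p(Suc n := y))"
    using P xy unfolding is_partition_def by (auto simp: less_Suc_eq)
  have "(\<Sum>i<n. norm (\<gamma> ((p(Suc n := y)) (Suc i)) - \<gamma> ((p(Suc n := y)) i)))
        = (\<Sum>i<n. norm (\<gamma> (p (Suc i)) - \<gamma> (p i)))"
    by (rule sum.cong) auto
  moreover have "p n = x" using P unfolding is_partition_def by simp
  ultimately show "(\<Sum>i<Suc n. norm (\<gamma> ((p(Suc n := y)) (Suc i)) - \<gamma> ((p(Suc n := y)) i)))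
         = (\<Sum>i<n. norm (\<gamma> (p (Suc i)) - \<gamma> (p i))) + norm (\<gamma> y - \<gamma> x)"
    by simp
qed

lemma var_exists:
  fixes \<gamma> :: "real \<Rightarrow> 'a::real_normed_vector"
  assumes ab: "a \<le> b" and bv: "bounded_variation_on a b \<gamma>"
  shows "\<exists>V. (\<forall>x y. a \<le> x \<longrightarrow> x \<le> y \<longrightarrow> y \<le> b \<longrightarrow> norm (\<gamma> y - \<gamma> x) \<le> V y - V x) \<and> (\<forall>x\<in>{a..b}. 0 \<le> V x)"
proof -
  obtain M where M: "\<forall>n p. is_partition a b n p \<longrightarrow> (\<Sum>i<n. norm (\<gamma> (p (Suc i)) - \<gamma> (p i))) \<le> M"
    using bv unfolding bounded_variation_on_def by blast
  define S where "S x = {(\<Sum>i<n. norm (\<gamma> (p (Suc i)) - \<gamma> (p i))) | n p. is_partition a x n p}" for x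
  define V where "V x = Sup (S x)" for x
  have ext: "s + norm (\<gamma> y - \<gamma> x) \<in> S y" if sx: "s \<in> S x" and xy: "x \<le> y" for s x y
  proof -
    obtain n p where np: "s = (\<Sum>i<n. norm (\<gamma> (p (Suc i)) - \<gamma> (p i)))" "is_partition a x n p"
      using sx unfolding S_def by blast
    have "s + norm (\<gamma> y - \<gamma> x) = (\<Sum>i<Suc n. norm (\<gamma> ((p(Suc n := y)) (Suc i)) - \<gamma> ((p(Suc n := y)) i)))"
      using part_extend(2)[OF np(2) xy, of \<gamma>] np(1) by simp
    then show ?thesis unfolding S_def using part_extend(1)[OF np(2) xy] by blast
  qed
  have bdd: "bdd_above (S x)" if "x \<le> b" for x
    unfolding bdd_above_def
  proof (intro exI[of _ M] ballI)
    fix s assume "s \<in> S x"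
    then have "s + norm (\<gamma> b - \<gamma> x) \<in> S b" using ext that by blast
    then obtain n p where np: "s + norm (\<gamma> b - \<gamma> x) = (\<Sum>i<n. norm (\<gamma> (p (Suc i)) - \<gamma> (p i)))"
      "is_partition a b n p" unfolding S_def by blast
    have "(\<Sum>i<n. norm (\<gamma> (p (Suc i)) - \<gamma> (p i))) \<le> M" using M np(2) by blast
    then have "s + norm (\<gamma> b - \<gamma> x) \<le> M" using np(1) by simp
    then show "s \<le> M" using norm_ge_zero[of "\<gamma> b - \<gamma> x"] by linarith
  qed
  have ne: "norm (\<gamma> x - \<gamma> a) \<in> S x" if "a \<le> x" for x
  proof -
    define q where "q = (\<lambda>i::nat. if i = 0 then a else x)"
    have "is_partition a x 1 q" using that unfolding is_partition_def q_def by auto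
    moreover have "norm (\<gamma> x - \<gamma> a) = (\<Sum>i<1. norm (\<gamma> (q (Suc i)) - \<gamma> (q i)))"
      by (simp add: q_def)
    ultimately show ?thesis unfolding S_def by blast
  qed
  have key: "norm (\<gamma> y - \<gamma> x) \<le> V y - V x" if "a \<le> x" "x \<le> y" "y \<le> b" for x y
  proof -
    have "V x \<le> V y - norm (\<gamma> y - \<gamma> x)" unfolding V_def
    proof (rule cSup_least)
      show "S x \<noteq> {}" using ne[OF that(1)] by blast
      fix s assume "s \<in> S x"
      then have "s + norm (\<gamma> y - \<gamma> x) \<in> S y" using ext that by blast
      then have "s + norm (\<gamma> y - \<gamma> x) \<le> Sup (S y)" using bdd[OF that(3)] by (rule cSup_upper)
      then show "s \<le> Sup (S y) - norm (\<gamma> y - \<gamma> x)" by linarith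
    qed
    then show ?thesis by linarith
  qed
  have V0: "0 \<le> V x" if "x \<in> {a..b}" for x
  proof -
    have "norm (\<gamma> x - \<gamma> a) \<le> V x" unfolding V_def using ne bdd that by (intro cSup_upper) auto
    then show ?thesis using norm_ge_zero[of "\<gamma> x - \<gamma> a"] by linarith
  qed
  show ?thesis using key V0 by blast
qed

locale sigpath =
  fixes \<gamma> :: "real \<Rightarrow> 'a::euclidean_space" and a b :: real and V :: "real \<Rightarrow> real"
  assumes ab: "a \<le> b" and gc: "continuous_on {a..b} \<gamma>"
    and Vc: "\<And>x y. a \<le> x \<Longrightarrow> x \<le> y \<Longrightarrow> y \<le> b \<Longrightarrow> norm (\<gamma> y - \<gamma> x) \<le> V y - V x"
    and V0: "\<And>x. x \<in> {a..b} \<Longrightarrow> 0 \<le> V x"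
begin

lemma ctrl_i: assumes i: "i \<in> Basis" shows "ctrl V (\<lambda>u. \<gamma> u \<bullet> i) a b"
  unfolding ctrl_def
proof (intro allI impI)
  fix x y assume xy: "a \<le> x" "x \<le> y" "y \<le> b"
  have "\<bar>\<gamma> y \<bullet> i - \<gamma> x \<bullet> i\<bar> = \<bar>(\<gamma> y - \<gamma> x) \<bullet> i\<bar>" by (simp add: inner_diff_left)
  also have "\<dots> \<le> norm (\<gamma> y - \<gamma> x)" by (rule Basis_le_norm[OF i])
  also have "\<dots> \<le> V y - V x" by (rule Vc[OF xy])
  finally show "\<bar>\<gamma> y \<bullet> i - \<gamma> x \<bullet> i\<bar> \<le> V y - V x" .
qed

lemma cont_i: "continuous_on {a..b} (\<lambda>u. \<gamma> u \<bullet> i)"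
  by (intro continuous_intros gc)

lemma Vmono: assumes "u \<in> {a..b}" shows "V u \<le> V b"
proof -
  have "norm (\<gamma> b - \<gamma> u) \<le> V b - V u" using Vc[of u b] assms by auto
  then show ?thesis using norm_ge_zero[of "\<gamma> b - \<gamma> u"] by linarith
qed

lemma sig_props:
  "set is \<subseteq> Basis \<Longrightarrow> continuous_on {a..b} (\<lambda>u. sig_coord \<gamma> a u is) \<and>
     (\<forall>u\<in>{a..b}. \<bar>sig_coord \<gamma> a u is\<bar> \<le> V u ^ length is / fact (length is))"
proof (induction "is")
  case Nil
  then show ?case by simp
next
  case (Cons i js)
  then have i: "i \<in> Basis" and js: "set js \<subseteq> Basis" by auto
  then have IHc: "continuous_on {a..b} (\<lambda>u. sig_coord \<gamma> a u js)"
    and IHb: "\<And>u. u \<in> {a..b} \<Longrightarrow> \<bar>sig_coord \<gamma> a u js\<bar> \<le> V u ^ length js / fact (length js)"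
    using Cons.IH by auto
  have eq: "(\<lambda>u. sig_coord \<gamma> a u (i # js)) = (\<lambda>u. RS_integral (\<lambda>u. sig_coord \<gamma> a u js) (\<lambda>u. \<gamma> u \<bullet> i) a u)"
    by simp
  have C: "continuous_on {a..b} (\<lambda>u. sig_coord \<gamma> a u (i # js))"
    unfolding eq by (rule RS_cont[OF ab IHc cont_i ctrl_i[OF i]])
  have B: "\<bar>sig_coord \<gamma> a u (i # js)\<bar> \<le> V u ^ length (i # js) / fact (length (i # js))" if u: "u \<in> {a..b}" for u
  proof -
    obtain I where I: "has_RS_integral (\<lambda>u. sig_coord \<gamma> a u js) (\<lambda>u. \<gamma> u \<bullet> i) a u I"
      using RS_exists[OF _ _ IHc cont_i ctrl_i[OF i], of u] u by auto
    have au: "a \<le> u" using u by simp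
    have "sig_coord \<gamma> a u (i # js) = I" using RS_integral_eq[OF au I] by simp
    moreover have "\<bar>I\<bar> \<le> V u ^ Suc (length js) / fact (Suc (length js))"
    proof (rule RS_bound[OF au I])
      fix n x assume P: "is_partition a u n x"
      show "\<bar>RSsum (\<lambda>u. sig_coord \<gamma> a u js) (\<lambda>u. \<gamma> u \<bullet> i) n x x\<bar> \<le> V u ^ Suc (length js) / fact (Suc (length js))"
      proof (rule SB2[OF P ctrl_sub[OF ctrl_i[OF i]] V0])
        show "u \<le> b" using u by simp
        show "a \<in> {a..b}" using ab by simp
        fix j assume "j < n"
        then have "x j \<in> {a..b}" using part_in[OF P, of j] u by auto
        then show "\<bar>sig_coord \<gamma> a (x j) js\<bar> \<le> V (x j) ^ length js / fact (length js)" by (rule IHb)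
      qed
    qed
    ultimately show ?thesis by simp
  qed
  show ?case using C B by blast
qed

lemma sig_has:
  assumes "set (i # js) \<subseteq> Basis" "s \<in> {a..b}"
  shows "has_RS_integral (\<lambda>u. sig_coord \<gamma> a u js) (\<lambda>u. \<gamma> u \<bullet> i) a s (sig_coord \<gamma> a s (i # js))"
proof -
  have i: "i \<in> Basis" and js: "set js \<subseteq> Basis" using assms by auto
  have IHc: "continuous_on {a..b} (\<lambda>u. sig_coord \<gamma> a u js)" using sig_props[OF js] by blast
  obtain I where I: "has_RS_integral (\<lambda>u. sig_coord \<gamma> a u js) (\<lambda>u. \<gamma> u \<bullet> i) a s I"
    using RS_exists[OF _ _ IHc cont_i ctrl_i[OF i], of s] assms(2) by auto
  have "sig_coord \<gamma> a s (i # js) = I" using RS_integral_eq[OF _ I] assms(2) by simp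
  then show ?thesis using I by simp
qed

lemma sig_bound:
  assumes "set is \<subseteq> Basis" "u \<in> {a..b}"
  shows "\<bar>sig_coord \<gamma> a u is\<bar> \<le> V b ^ length is / fact (length is)"
proof -
  have "\<bar>sig_coord \<gamma> a u is\<bar> \<le> V u ^ length is / fact (length is)" using sig_props[OF assms(1)] assms(2) by blast
  also have "\<dots> \<le> V b ^ length is / fact (length is)"
    using V0[OF assms(2)] Vmono[OF assms(2)] by (intro divide_right_mono power_mono) auto
  finally show ?thesis .
qed

lemma sig_scale:
  "set is \<subseteq> Basis \<Longrightarrow> s \<in> {a..b} \<Longrightarrow> sig_coord (\<lambda>u. \<theta> *\<^sub>R \<gamma> u) a s is = \<theta> ^ length is * sig_coord \<gamma> a s is"
proof (induction "is" arbitrary: s)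
  case Nil then show ?case by simp
next
  case (Cons i js)
  have js: "set js \<subseteq> Basis" using Cons.prems by auto
  define J where "J = sig_coord \<gamma> a s (i # js)"
  have h1: "has_RS_integral (\<lambda>u. sig_coord \<gamma> a u js) (\<lambda>u. \<gamma> u \<bullet> i) a s J"
    unfolding J_def by (rule sig_has[OF Cons.prems])
  have h2: "has_RS_integral (\<lambda>u. \<theta> * (\<theta> ^ length js * sig_coord \<gamma> a u js)) (\<lambda>u. \<gamma> u \<bullet> i) a s (\<theta> * (\<theta> ^ length js * J))"
    by (intro has_RS_cmul h1)
  have h3: "has_RS_integral (\<lambda>u. \<theta> ^ length js * sig_coord \<gamma> a u js) (\<lambda>u. \<theta> * (\<gamma> u \<bullet> i)) a s (\<theta> * (\<theta> ^ length js * J))"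
    using h2 by (simp only: has_RS_scale_intg)
  have ig: "(\<lambda>u. (\<theta> *\<^sub>R \<gamma> u) \<bullet> i) = (\<lambda>u. \<theta> * (\<gamma> u \<bullet> i))" by simp
  have h4: "has_RS_integral (\<lambda>u. sig_coord (\<lambda>u. \<theta> *\<^sub>R \<gamma> u) a u js) (\<lambda>u. (\<theta> *\<^sub>R \<gamma> u) \<bullet> i) a s (\<theta> * (\<theta> ^ length js * J))"
    unfolding ig
  proof (rule iffD2[OF has_RS_cong h3])
    fix u assume "u \<in> {a..s}"
    then have "u \<in> {a..b}" using Cons.prems(2) by auto
    then show "sig_coord (\<lambda>u. \<theta> *\<^sub>R \<gamma> u) a u js = \<theta> ^ length js * sig_coord \<gamma> a u js"
      using Cons.IH[OF js] by blast
  qed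
  have "sig_coord (\<lambda>u. \<theta> *\<^sub>R \<gamma> u) a s (i # js) = \<theta> * (\<theta> ^ length js * J)"
    using RS_integral_eq[OF _ h4] Cons.prems(2) by simp
  then show ?case unfolding J_def by simp
qed

end



lemma inner_scale1:
  fixes \<gamma> \<sigma> :: "real \<Rightarrow> 'a::euclidean_space"
  assumes G: "sigpath \<gamma> a b V" and s: "s \<in> {a..b}"
  shows "sig_inner k (\<lambda>u. \<theta> *\<^sub>R \<gamma> u) \<sigma> a s t = \<theta> ^ k * sig_inner k \<gamma> \<sigma> a s t"
  unfolding sig_inner_def sum_distrib_left
proof (rule sum.cong)
  fix "is" :: "'a list" assume "is \<in> {is. set is \<subseteq> Basis \<and> length is = k}"
  then have "set is \<subseteq> Basis" "length is = k" by auto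
  then show "sig_coord (\<lambda>u. \<theta> *\<^sub>R \<gamma> u) a s is * sig_coord \<sigma> a t is = \<theta> ^ k * (sig_coord \<gamma> a s is * sig_coord \<sigma> a t is)"
    using sigpath.sig_scale[OF G, of "is" s \<theta>] s by simp
qed simp

lemma inner_scale2:
  fixes \<gamma> \<sigma> :: "real \<Rightarrow> 'a::euclidean_space"
  assumes S: "sigpath \<sigma> a b V" and t: "t \<in> {a..b}"
  shows "sig_inner k \<gamma> (\<lambda>u. \<theta> *\<^sub>R \<sigma> u) a s t = \<theta> ^ k * sig_inner k \<gamma> \<sigma> a s t"
  unfolding sig_inner_def sum_distrib_left
proof (rule sum.cong)
  fix "is" :: "'a list" assume "is \<in> {is. set is \<subseteq> Basis \<and> length is = k}"
  then have "set is \<subseteq> Basis" "length is = k" by auto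
  then show "sig_coord \<gamma> a s is * sig_coord (\<lambda>u. \<theta> *\<^sub>R \<sigma> u) a t is = \<theta> ^ k * (sig_coord \<gamma> a s is * sig_coord \<sigma> a t is)"
    using sigpath.sig_scale[OF S, of "is" t \<theta>] t by simp
qed simp

lemma inner_zero: "sig_inner 0 \<gamma> \<sigma> a s t = 1"
proof -
  have "{is::'a::euclidean_space list. set is \<subseteq> Basis \<and> length is = 0} = {[]}" by auto
  then show ?thesis unfolding sig_inner_def by simp
qed

lemma inner_Suc:
  fixes \<gamma> \<sigma> :: "real \<Rightarrow> 'a::euclidean_space"
  shows "sig_inner (Suc k) \<gamma> \<sigma> a s t =
    (\<Sum>i\<in>Basis. \<Sum>js\<in>{js. set js \<subseteq> Basis \<and> length js = k}. sig_coord \<gamma> a s (i # js) * sig_coord \<sigma> a t (i # js))"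
proof -
  let ?L = "{js::'a list. set js \<subseteq> Basis \<and> length js = k}"
  let ?F = "\<lambda>is. sig_coord \<gamma> a s is * sig_coord \<sigma> a t is"
  have inj: "inj_on (\<lambda>(xs, n). n # xs) (?L \<times> Basis)" by (auto simp: inj_on_def)
  have "sig_inner (Suc k) \<gamma> \<sigma> a s t = sum ?F ((\<lambda>(xs, n). n # xs) ` (?L \<times> Basis))"
    unfolding sig_inner_def lists_length_Suc_eq ..
  also have "\<dots> = (\<Sum>p\<in>?L \<times> Basis. ?F ((\<lambda>(xs, n). n # xs) p))"
    by (simp add: sum.reindex[OF inj])
  also have "\<dots> = (\<Sum>js\<in>?L. \<Sum>i\<in>Basis. ?F (i # js))"
    by (simp add: sum.cartesian_product split_def)
  also have "\<dots> = (\<Sum>i\<in>Basis. \<Sum>js\<in>?L. ?F (i # js))" by (rule sum.swap)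
  finally show ?thesis .
qed



lemma kernel_pde:
  fixes \<gamma> \<sigma> :: "real \<Rightarrow> 'a::euclidean_space"
  assumes G: "sigpath \<gamma> a b Vg" and S: "sigpath \<sigma> a b Vs" and s: "s \<in> {a..b}" and t: "t \<in> {a..b}"
  shows "sig_kernel (\<lambda>n. \<theta> ^ n) \<gamma> \<sigma> a s t =
           1 + \<theta> * (\<Sum>i\<in>Basis.
              RS_integral (\<lambda>u. RS_integral (\<lambda>v. sig_kernel (\<lambda>n. \<theta> ^ n) \<gamma> \<sigma> a u v) (\<lambda>v. \<sigma> v \<bullet> i) a t)
                          (\<lambda>u. \<gamma> u \<bullet> i) a s)"
proof -
  interpret G: sigpath \<gamma> a b Vg by (rule G)
  interpret S: sigpath \<sigma> a b Vs by (rule S)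
  have at: "a \<le> t" and tb: "t \<le> b" and as: "a \<le> s" and sb: "s \<le> b" using s t by auto
  define L where "L k = {is::'a list. set is \<subseteq> Basis \<and> length is = k}" for k
  have finL: "finite (L k)" for k unfolding L_def by (rule finite_lists_length_eq[OF finite_Basis])
  have cardL: "card (L k) = DIM('a) ^ k" for k unfolding L_def by (rule card_lists_length_eq[OF finite_Basis])
  define Lg where "Lg = Vg b"
  define Ls where "Ls = Vs b"
  have Lg0: "Lg \<ge> 0" using G.V0[of b] G.ab unfolding Lg_def by auto
  have Ls0: "Ls \<ge> 0" using S.V0[of b] S.ab unfolding Ls_def by auto
  define dd where "dd = real DIM('a)"
  have dd0: "dd \<ge> 0" unfolding dd_def by simp
  define Cc where "Cc = \<bar>\<theta>\<bar> * dd * Lg * Ls"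
  have bg: "\<bar>sig_coord \<gamma> a u js\<bar> \<le> Lg ^ k / fact k" if "js \<in> L k" "u \<in> {a..b}" for js u k
    using G.sig_bound[of js u] that unfolding L_def Lg_def by auto
  have bs: "\<bar>sig_coord \<sigma> a u js\<bar> \<le> Ls ^ k / fact k" if "js \<in> L k" "u \<in> {a..b}" for js u k
    using S.sig_bound[of js u] that unfolding L_def Ls_def by auto
  have msum: "summable (\<lambda>k. Cc ^ k / fact k)"
    using summable_exp[of Cc] by (simp add: divide_inverse mult.commute)
  have divfact: "x / fact k \<le> x" if "x \<ge> 0" for x :: real and k
  proof -
    have "x / fact k \<le> x / 1" by (rule divide_left_mono) (use that in auto)
    then show ?thesis by simp
  qed
  have gb: "\<bar>\<theta> ^ k * (\<Sum>js\<in>L k. P js * Q js)\<bar> \<le> \<bar>\<theta>\<bar> ^ k * (dd ^ k * (p * q))"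
    if P: "\<And>js. js \<in> L k \<Longrightarrow> \<bar>P js\<bar> \<le> p" and Q: "\<And>js. js \<in> L k \<Longrightarrow> \<bar>Q js\<bar> \<le> q"
    for k P Q p q
  proof -
    have "\<bar>\<Sum>js\<in>L k. P js * Q js\<bar> \<le> (\<Sum>js\<in>L k. \<bar>P js * Q js\<bar>)" by (rule sum_abs)
    also have "\<dots> \<le> (\<Sum>js\<in>L k. p * q)"
    proof (rule sum_mono)
      fix js assume js: "js \<in> L k"
      have "0 \<le> p" using P[OF js] abs_ge_zero[of "P js"] by linarith
      then show "\<bar>P js * Q js\<bar> \<le> p * q" unfolding abs_mult using P[OF js] Q[OF js]
        by (intro mult_mono) auto
    qed
    also have "\<dots> = dd ^ k * (p * q)" using cardL unfolding dd_def by simp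
    finally have "\<bar>\<Sum>js\<in>L k. P js * Q js\<bar> \<le> dd ^ k * (p * q)" .
    then show ?thesis unfolding abs_mult power_abs by (intro mult_left_mono) auto
  qed
  define T where "T k u v = \<theta> ^ k * sig_inner k \<gamma> \<sigma> a u v" for k u v
  have Teq: "T k u v = \<theta> ^ k * (\<Sum>js\<in>L k. sig_coord \<gamma> a u js * sig_coord \<sigma> a v js)" for k u v
    unfolding T_def sig_inner_def L_def ..
  have Cpow: "\<bar>\<theta>\<bar> ^ k * (dd ^ k * (Lg ^ k * Ls ^ k)) = Cc ^ k" for k
    unfolding Cc_def by (simp add: power_mult_distrib mult_ac)
  have Tb: "\<bar>T k u v\<bar> \<le> Cc ^ k / fact k" if u: "u \<in> {a..b}" and v: "v \<in> {a..b}" for k u v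
  proof -
    have "\<bar>T k u v\<bar> \<le> \<bar>\<theta>\<bar> ^ k * (dd ^ k * ((Lg ^ k / fact k) * (Ls ^ k)))"
      unfolding Teq
    proof (rule gb)
      fix js assume js: "js \<in> L k"
      show "\<bar>sig_coord \<gamma> a u js\<bar> \<le> Lg ^ k / fact k" by (rule bg[OF js u])
      show "\<bar>sig_coord \<sigma> a v js\<bar> \<le> Ls ^ k" using bs[OF js v] divfact[of "Ls ^ k" k] Ls0 by simp
    qed
    also have "\<dots> = (\<bar>\<theta>\<bar> ^ k * (dd ^ k * (Lg ^ k * Ls ^ k))) / fact k" by simp
    also have "\<dots> = Cc ^ k / fact k" by (simp only: Cpow)
    finally show ?thesis .
  qed
  define A where "A k i u = \<theta> ^ k * (\<Sum>js\<in>L k. sig_coord \<gamma> a u js * sig_coord \<sigma> a t (i # js))" for k i u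
  define Y where "Y k i = \<theta> ^ k * (\<Sum>js\<in>L k. sig_coord \<gamma> a s (i # js) * sig_coord \<sigma> a t (i # js))" for k i
  have Ab: "\<bar>A k i u\<bar> \<le> Ls * (Cc ^ k / fact k)" if u: "u \<in> {a..b}" and i: "i \<in> Basis" for k i u
  proof -
    have "\<bar>A k i u\<bar> \<le> \<bar>\<theta>\<bar> ^ k * (dd ^ k * ((Lg ^ k / fact k) * (Ls * Ls ^ k)))"
      unfolding A_def
    proof (rule gb)
      fix js assume js: "js \<in> L k"
      show "\<bar>sig_coord \<gamma> a u js\<bar> \<le> Lg ^ k / fact k" by (rule bg[OF js u])
      have "i # js \<in> L (Suc k)" using js i unfolding L_def by auto
      then have "\<bar>sig_coord \<sigma> a t (i # js)\<bar> \<le> Ls ^ Suc k / fact (Suc k)" by (rule bs[OF _ t])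
      also have "\<dots> \<le> Ls ^ Suc k" using divfact[of "Ls ^ Suc k" "Suc k"] Ls0 by simp
      finally show "\<bar>sig_coord \<sigma> a t (i # js)\<bar> \<le> Ls * Ls ^ k" by simp
    qed
    also have "\<dots> = Ls * ((\<bar>\<theta>\<bar> ^ k * (dd ^ k * (Lg ^ k * Ls ^ k))) / fact k)" by (simp add: mult_ac)
    also have "\<dots> = Ls * (Cc ^ k / fact k)" by (simp only: Cpow)
    finally show ?thesis .
  qed
  have inner: "summable (\<lambda>k. A k i u) \<and> has_RS_integral (\<lambda>v. \<Sum>k. T k u v) (\<lambda>v. \<sigma> v \<bullet> i) a t (\<Sum>k. A k i u)"
    if u: "u \<in> {a..b}" and i: "i \<in> Basis" for u i
  proof -
    have Cs: "ctrl Vs (\<lambda>v. \<sigma> v \<bullet> i) a t" by (rule ctrl_sub[OF S.ctrl_i[OF i] tb])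
    show ?thesis
    proof (rule RS_series[OF at Cs _ _ msum])
      fix k
      show "has_RS_integral (\<lambda>v. T k u v) (\<lambda>v. \<sigma> v \<bullet> i) a t (A k i u)"
        unfolding Teq A_def
      proof (rule has_RS_cmul, rule has_RS_sum[OF finL])
        fix js assume "js \<in> L k"
        then have "set (i # js) \<subseteq> Basis" using i unfolding L_def by auto
        then show "has_RS_integral (\<lambda>v. sig_coord \<gamma> a u js * sig_coord \<sigma> a v js) (\<lambda>v. \<sigma> v \<bullet> i) a t
              (sig_coord \<gamma> a u js * sig_coord \<sigma> a t (i # js))"
          by (intro has_RS_cmul S.sig_has t)
      qed
      fix v assume "v \<in> {a..t}"
      then have "v \<in> {a..b}" using tb by auto
      then show "\<bar>T k u v\<bar> \<le> Cc ^ k / fact k" using Tb u by blast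
    qed
  qed
  have K_eq: "sig_kernel (\<lambda>n. \<theta> ^ n) \<gamma> \<sigma> a u v = (\<Sum>k. T k u v)" for u v
    unfolding sig_kernel_def T_def ..
  have innerI: "RS_integral (\<lambda>v. sig_kernel (\<lambda>n. \<theta> ^ n) \<gamma> \<sigma> a u v) (\<lambda>v. \<sigma> v \<bullet> i) a t = (\<Sum>k. A k i u)"
    if "u \<in> {a..b}" "i \<in> Basis" for u i
    unfolding K_eq using RS_integral_eq[OF at] inner[OF that] by blast
  have outer: "summable (\<lambda>k. Y k i) \<and> has_RS_integral (\<lambda>u. \<Sum>k. A k i u) (\<lambda>u. \<gamma> u \<bullet> i) a s (\<Sum>k. Y k i)"
    if i: "i \<in> Basis" for i
  proof -
    have Cg: "ctrl Vg (\<lambda>v. \<gamma> v \<bullet> i) a s" by (rule ctrl_sub[OF G.ctrl_i[OF i] sb])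
    show ?thesis
    proof (rule RS_series[OF as Cg _ _ summable_mult[OF msum, of Ls]])
      fix k
      show "has_RS_integral (\<lambda>u. A k i u) (\<lambda>u. \<gamma> u \<bullet> i) a s (Y k i)"
        unfolding A_def Y_def
      proof (rule has_RS_cmul, rule has_RS_sum[OF finL])
        fix js assume "js \<in> L k"
        then have "set (i # js) \<subseteq> Basis" using i unfolding L_def by auto
        then show "has_RS_integral (\<lambda>u. sig_coord \<gamma> a u js * sig_coord \<sigma> a t (i # js)) (\<lambda>u. \<gamma> u \<bullet> i) a s
              (sig_coord \<gamma> a s (i # js) * sig_coord \<sigma> a t (i # js))"
          by (intro has_RS_cmul_right G.sig_has s)
      qed
      fix u assume "u \<in> {a..s}"
      then have "u \<in> {a..b}" using sb by auto
      then show "\<bar>A k i u\<bar> \<le> Ls * (Cc ^ k / fact k)" using Ab i by blast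
    qed
  qed
  have outerI: "RS_integral (\<lambda>u. RS_integral (\<lambda>v. sig_kernel (\<lambda>n. \<theta> ^ n) \<gamma> \<sigma> a u v) (\<lambda>v. \<sigma> v \<bullet> i) a t)
                          (\<lambda>u. \<gamma> u \<bullet> i) a s = (\<Sum>k. Y k i)" if i: "i \<in> Basis" for i
  proof -
    have "has_RS_integral (\<lambda>u. RS_integral (\<lambda>v. sig_kernel (\<lambda>n. \<theta> ^ n) \<gamma> \<sigma> a u v) (\<lambda>v. \<sigma> v \<bullet> i) a t)
                          (\<lambda>u. \<gamma> u \<bullet> i) a s (\<Sum>k. Y k i)"
    proof (rule iffD2[OF has_RS_cong])
      show "has_RS_integral (\<lambda>u. \<Sum>k. A k i u) (\<lambda>u. \<gamma> u \<bullet> i) a s (\<Sum>k. Y k i)" using outer[OF i] by blast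
      fix u assume "u \<in> {a..s}"
      then have "u \<in> {a..b}" using sb by auto
      then show "RS_integral (\<lambda>v. sig_kernel (\<lambda>n. \<theta> ^ n) \<gamma> \<sigma> a u v) (\<lambda>v. \<sigma> v \<bullet> i) a t = (\<Sum>k. A k i u)"
        using innerI i by blast
    qed
    then show ?thesis using RS_integral_eq[OF as] by blast
  qed
  have sumT: "summable (\<lambda>k. T k s t)"
    by (rule summable_comparison_test'[OF msum, of 0]) (use Tb s t in simp)
  have TSuc: "\<theta> * (\<Sum>i\<in>Basis. Y k i) = T (Suc k) s t" for k
    unfolding T_def Y_def inner_Suc L_def by (simp add: sum_distrib_left mult.assoc)
  have T0: "T 0 s t = 1" unfolding T_def using inner_zero by simp
  have sumY: "summable (\<lambda>k. Y k i)" if "i \<in> Basis" for i using outer[OF that] by blast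
  have sumY2: "summable (\<lambda>k. \<Sum>i\<in>Basis. Y k i)" by (rule summable_sum) (rule sumY)
  have "(\<Sum>i\<in>Basis. RS_integral (\<lambda>u. RS_integral (\<lambda>v. sig_kernel (\<lambda>n. \<theta> ^ n) \<gamma> \<sigma> a u v) (\<lambda>v. \<sigma> v \<bullet> i) a t)
                          (\<lambda>u. \<gamma> u \<bullet> i) a s) = (\<Sum>i\<in>Basis. \<Sum>k. Y k i)"
    by (rule sum.cong) (simp_all add: outerI)
  also have "\<dots> = (\<Sum>k. \<Sum>i\<in>Basis. Y k i)" by (rule suminf_sum[symmetric]) (rule sumY)
  finally have "\<theta> * (\<Sum>i\<in>Basis. RS_integral (\<lambda>u. RS_integral (\<lambda>v. sig_kernel (\<lambda>n. \<theta> ^ n) \<gamma> \<sigma> a u v) (\<lambda>v. \<sigma> v \<bullet> i) a t)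
                          (\<lambda>u. \<gamma> u \<bullet> i) a s) = (\<Sum>k. \<theta> * (\<Sum>i\<in>Basis. Y k i))"
    using suminf_mult[OF sumY2, of \<theta>] by simp
  also have "\<dots> = (\<Sum>k. T (Suc k) s t)" by (simp only: TSuc)
  also have "\<dots> = (\<Sum>k. T k s t) - 1" using suminf_split_head[OF sumT] T0 by simp
  finally show ?thesis unfolding K_eq by simp
qed


theorem mainTheorem12:
  fixes \<gamma> \<sigma> :: "real \<Rightarrow> 'a::euclidean_space" and \<phi> :: "nat \<Rightarrow> real"
    and \<theta> a b s t :: real
  assumes \<phi>_growth: "\<forall>C>0. summable (\<lambda>k. C ^ k * \<bar>\<phi> k\<bar> / (fact k)\<^sup>2)"
    and \<gamma>_cont: "continuous_on {a..b} \<gamma>" and \<gamma>_bv: "bounded_variation_on a b \<gamma>"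
    and \<sigma>_cont: "continuous_on {a..b} \<sigma>" and \<sigma>_bv: "bounded_variation_on a b \<sigma>"
    and s: "s \<in> {a..b}" and t: "t \<in> {a..b}"
  shows "sig_kernel (\<lambda>n. \<theta> ^ n * \<phi> n) \<gamma> \<sigma> a s t = sig_kernel \<phi> (\<lambda>u. \<theta> *\<^sub>R \<gamma> u) \<sigma> a s t
       \<and> sig_kernel \<phi> (\<lambda>u. \<theta> *\<^sub>R \<gamma> u) \<sigma> a s t = sig_kernel \<phi> \<gamma> (\<lambda>v. \<theta> *\<^sub>R \<sigma> v) a s t
       \<and> sig_kernel (\<lambda>n. \<theta> ^ n) \<gamma> \<sigma> a s t =
           1 + \<theta> * (\<Sum>i\<in>Basis.
              RS_integral (\<lambda>u. RS_integral (\<lambda>v. sig_kernel (\<lambda>n. \<theta> ^ n) \<gamma> \<sigma> a u v) (\<lambda>v. \<sigma> v \<bullet> i) a t)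
                          (\<lambda>u. \<gamma> u \<bullet> i) a s)"
proof -
  have ab: "a \<le> b" using s by simp
  obtain Vg where Vg: "\<forall>x y. a \<le> x \<longrightarrow> x \<le> y \<longrightarrow> y \<le> b \<longrightarrow> norm (\<gamma> y - \<gamma> x) \<le> Vg y - Vg x"
    "\<forall>x\<in>{a..b}. 0 \<le> Vg x"
    using var_exists[OF ab \<gamma>_bv] by blast
  obtain Vs where Vs: "\<forall>x y. a \<le> x \<longrightarrow> x \<le> y \<longrightarrow> y \<le> b \<longrightarrow> norm (\<sigma> y - \<sigma> x) \<le> Vs y - Vs x"
    "\<forall>x\<in>{a..b}. 0 \<le> Vs x"
    using var_exists[OF ab \<sigma>_bv] by blast
  have G: "sigpath \<gamma> a b Vg" by (rule sigpath.intro) (use ab \<gamma>_cont Vg in auto)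
  have S: "sigpath \<sigma> a b Vs" by (rule sigpath.intro) (use ab \<sigma>_cont Vs in auto)
  have k1: "sig_inner k (\<lambda>u. \<theta> *\<^sub>R \<gamma> u) \<sigma> a s t = \<theta> ^ k * sig_inner k \<gamma> \<sigma> a s t" for k
    by (rule inner_scale1[OF G s])
  have k2: "sig_inner k \<gamma> (\<lambda>v. \<theta> *\<^sub>R \<sigma> v) a s t = \<theta> ^ k * sig_inner k \<gamma> \<sigma> a s t" for k
    by (rule inner_scale2[OF S t])
  have c1: "sig_kernel (\<lambda>n. \<theta> ^ n * \<phi> n) \<gamma> \<sigma> a s t = sig_kernel \<phi> (\<lambda>u. \<theta> *\<^sub>R \<gamma> u) \<sigma> a s t"
    unfolding sig_kernel_def k1 by (simp add: mult_ac)
  have c2: "sig_kernel \<phi> (\<lambda>u. \<theta> *\<^sub>R \<gamma> u) \<sigma> a s t = sig_kernel \<phi> \<gamma> (\<lambda>v. \<theta> *\<^sub>R \<sigma> v) a s t"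
    unfolding sig_kernel_def k1 k2 ..
  show ?thesis using c1 c2 kernel_pde[OF G S s t, of \<theta>] by blast
qed

end
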